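(* Let $W\subset J^k(3,3)$ be a submanifold. Fix a smooth $\bm\xi:U\to\mathbb{R}^4\setminus\{\bm0\}$ and a point $(u_0,t_0)\in U\times I$ with $\xi_4(u_0)\ne0$. Then the set $$T^{\bm\xi}_{4,W,(u_0,t_0)}=\{\bm x\in C^\infty(U,\mathbb{R}^4):\ j^k_1(\tilde\pi_4\circ\widetilde F_{(\bm x,\bm\xi)})\ \text{is transverse to } W \text{ at the point corresponding to }(u_0,t_0)\}$$ is residual in $C^\infty(U,\mathbb{R}^4)$ with the Whitney $C^\infty$ topology. The same holds with the index $4$ replaced by $j\in\{1,2,3\}$ when $\xi_j(u_0)\neq0$ (using $c_j$ and the projection $\tilde\pi_j$ forgetting the $j$-th coordinate).
   Context: $U\subset\mathbb{R}^3$ open, $I\subset\mathbb{R}$ open interval. For $\bm x\in C^\infty(U,\mathbb{R}^4)$: $a_0=x_4(u_0)+t_0\xi_4(u_0)$, $c_4(u)=-(x_4(u)-a_0)/\xi_4(u)$, and $\widetilde F_{(\bm x,\bm\xi)}(u,\tilde t)=\bm x(u)+c_4(u)\bm\xi(u)+\tilde t\bm\xi(u)$ (so $\tilde t=t-c_4(u)$ and $(u_0,t_0)$ corresponds to $(u_0,0)$). $\tilde\pi_4(y_1,y_2,y_3,y_4)=(y_1,y_2,y_3)$. For $G:U\times I\to\mathbb{R}^3$, $j^k_1G(u,s)=j^k G_s(u)\in J^k(3,3)$ where $G_s=G(\cdot,s)$, $J^k(3,3)$ the space of $k$-jets of map germs $(\mathbb{R}^3,0)\to(\mathbb{R}^3,0)$.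 *)

theory Defs
  imports "HOL-Analysis.Analysis"
begin

definition pdiff :: "'a::euclidean_space \<Rightarrow> ('a \<Rightarrow> 'b::real_normed_vector) \<Rightarrow> 'a \<Rightarrow> 'b" where
  "pdiff b f = (\<lambda>u. frechet_derivative f (at u) b)"

fun Ck_on :: "nat \<Rightarrow> 'a::euclidean_space set \<Rightarrow> ('a \<Rightarrow> 'b::real_normed_vector) \<Rightarrow> bool" where
  "Ck_on 0 U f = continuous_on U f"
| "Ck_on (Suc k) U f = ((\<forall>u\<in>U. f differentiable (at u)) \<and> (\<forall>b\<in>Basis. Ck_on k U (pdiff b f)))"

definition smooth_on :: "'a::euclidean_space set \<Rightarrow> ('a \<Rightarrow> 'b::real_normed_vector) \<Rightarrow> bool" where
  "smooth_on U f \<longleftrightarrow> (\<forall>k. Ck_on k U f)"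

definition Dmulti :: "nat \<times> nat \<times> nat \<Rightarrow> (real^3 \<Rightarrow> 'b::real_normed_vector) \<Rightarrow> real^3 \<Rightarrow> 'b" where
  "Dmulti \<alpha> f = (case \<alpha> of (a, b, c) \<Rightarrow>
     (pdiff (axis 1 1) ^^ a) ((pdiff (axis 2 1) ^^ b) ((pdiff (axis 3 1) ^^ c) f)))"

text \<open>Elements of C^\<infinity>(U,R^4) are represented by smooth maps on U that vanish outside U.\<close>
definition Cinf :: "(real^3) set \<Rightarrow> (real^3 \<Rightarrow> real^4) set" where
  "Cinf U = {f. smooth_on U f \<and> (\<forall>u. u \<notin> U \<longrightarrow> f u = 0)}"

definition whitney_nbhd :: "(real^3) set \<Rightarrow> (real^3 \<Rightarrow> real^4) \<Rightarrow> nat \<Rightarrow> (real^3 \<Rightarrow> real) \<Rightarrow> (real^3 \<Rightarrow> real^4) set" where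
  "whitney_nbhd U f k \<delta> = {g. \<forall>u\<in>U. \<forall>a b c. a + b + c \<le> k \<longrightarrow>
       norm (Dmulti (a,b,c) g u - Dmulti (a,b,c) f u) < \<delta> u}"

definition whitney_Cinf :: "(real^3) set \<Rightarrow> (real^3 \<Rightarrow> real^4) topology" where
  "whitney_Cinf U = topology (\<lambda>S. S \<subseteq> Cinf U \<and>
     (\<forall>f\<in>S. \<exists>k \<delta>. continuous_on U \<delta> \<and> (\<forall>u\<in>U. 0 < \<delta> u) \<and> Cinf U \<inter> whitney_nbhd U f k \<delta> \<subseteq> S))"

definition residual_in :: "'a topology \<Rightarrow> 'a set \<Rightarrow> bool" where
  "residual_in X S \<longleftrightarrow> S \<subseteq> topspace X \<and>
     (\<exists>\<F>. countable \<F> \<and> (\<forall>T\<in>\<F>. openin X T \<and> X closure_of T = topspace X) \<and>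
           topspace X \<inter> \<Inter>\<F> \<subseteq> S)"

text \<open>Coordinates of J^k(3,3): Taylor coefficients indexed by multi-index alpha with
  1 <= |alpha| <= k and output component i.\<close>
definition jet_index :: "nat \<Rightarrow> ((nat \<times> nat \<times> nat) \<times> 3) set" where
  "jet_index k = {((a,b,c),i). 1 \<le> a + b + c \<and> a + b + c \<le> k}"

text \<open>k-jet at u of the germ v |-> g(u+v) - g(u), read in the coordinates given by idx.\<close>
definition jet :: "('j \<Rightarrow> (nat \<times> nat \<times> nat) \<times> 3) \<Rightarrow> (real^3 \<Rightarrow> real^3) \<Rightarrow> real^3 \<Rightarrow> real^'j" where
  "jet idx g u = (\<chi> j. case idx j of ((a,b,c),i) \<Rightarrow>
      (Dmulti (a,b,c) g u $ i) / (fact a * fact b * fact c))"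

definition submanifold :: "('a::euclidean_space) set \<Rightarrow> bool" where
  "submanifold W \<longleftrightarrow> (\<forall>w\<in>W. \<exists>V (\<psi>::'a \<Rightarrow> 'a) L. open V \<and> w \<in> V \<and> subspace L \<and>
      smooth_on V \<psi> \<and> inj_on \<psi> V \<and> open (\<psi> ` V) \<and> smooth_on (\<psi> ` V) (inv_into V \<psi>) \<and>
      \<psi> ` (W \<inter> V) = L \<inter> \<psi> ` V)"

definition tangent_space :: "('a::euclidean_space) set \<Rightarrow> 'a \<Rightarrow> 'a set" where
  "tangent_space W w = {v. \<exists>\<gamma> e. 0 < e \<and> \<gamma> 0 = w \<and> (\<forall>t. \<bar>t\<bar> < e \<longrightarrow> \<gamma> t \<in> W) \<and>
      (\<gamma> has_vector_derivative v) (at 0)}"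

definition transversal_at :: "('c::real_normed_vector \<Rightarrow> 'a::euclidean_space) \<Rightarrow> 'a set \<Rightarrow> 'c \<Rightarrow> bool" where
  "transversal_at J W p \<longleftrightarrow> (J p \<in> W \<longrightarrow>
      (\<exists>J'. (J has_derivative J') (at p) \<and>
            {y + z | y z. y \<in> range J' \<and> z \<in> tangent_space W (J p)} = UNIV))"

definition forget_coord :: "4 \<Rightarrow> real^4 \<Rightarrow> real^3" where
  "forget_coord j y =
     (if j = 1 then vector [y$2, y$3, y$4]
      else if j = 2 then vector [y$1, y$3, y$4]
      else if j = 3 then vector [y$1, y$2, y$4]
      else vector [y$1, y$2, y$3])"

definition a_const :: "4 \<Rightarrow> (real^3 \<Rightarrow> real^4) \<Rightarrow> (real^3 \<Rightarrow> real^4) \<Rightarrow> real^3 \<Rightarrow> real \<Rightarrow> real" where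
  "a_const j x \<xi> u0 t0 = x u0 $ j + t0 * \<xi> u0 $ j"

definition c_fun :: "4 \<Rightarrow> (real^3 \<Rightarrow> real^4) \<Rightarrow> (real^3 \<Rightarrow> real^4) \<Rightarrow> real^3 \<Rightarrow> real \<Rightarrow> real^3 \<Rightarrow> real" where
  "c_fun j x \<xi> u0 t0 u = - (x u $ j - a_const j x \<xi> u0 t0) / (\<xi> u $ j)"

definition Ftilde :: "4 \<Rightarrow> (real^3 \<Rightarrow> real^4) \<Rightarrow> (real^3 \<Rightarrow> real^4) \<Rightarrow> real^3 \<Rightarrow> real \<Rightarrow> (real^3) \<times> real \<Rightarrow> real^4" where
  "Ftilde j x \<xi> u0 t0 = (\<lambda>(u, s). x u + c_fun j x \<xi> u0 t0 u *\<^sub>R \<xi> u + s *\<^sub>R \<xi> u)"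

definition jet1 :: "('j \<Rightarrow> (nat \<times> nat \<times> nat) \<times> 3) \<Rightarrow> ((real^3) \<times> real \<Rightarrow> real^3) \<Rightarrow> (real^3) \<times> real \<Rightarrow> real^'j" where
  "jet1 idx G = (\<lambda>(u, s). jet idx (\<lambda>v. G (v, s)) u)"

end

theory Submission
  imports Defs "HOL-Computational_Algebra.Polynomial"
begin


lemma frechet_cong_open:
  assumes "open V" "u \<in> V" "\<And>v. v \<in> V \<Longrightarrow> f v = g v"
  shows "frechet_derivative f (at u) = frechet_derivative g (at u)"
proof -
  have "\<And>D. (f has_derivative D) (at u) \<longleftrightarrow> (g has_derivative D) (at u)"
    using has_derivative_transform_within_open[OF _ assms(1,2)] assms(3) by metis
  then show ?thesis unfolding frechet_derivative_def by simp
qed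

lemma pdiff_cong_open:
  assumes "open V" "u \<in> V" "\<And>v. v \<in> V \<Longrightarrow> f v = g v"
  shows "pdiff b f u = pdiff b g u"
  using frechet_cong_open[OF assms] unfolding pdiff_def by simp

lemma differentiable_cong_open:
  assumes "open V" "u \<in> V" "\<And>v. v \<in> V \<Longrightarrow> f v = g v" "f differentiable (at u)"
  shows "g differentiable (at u)"
  using assms has_derivative_transform_within_open unfolding differentiable_def by metis

lemma pdiff_at:
  assumes "(f has_derivative D) (at u)"
  shows "pdiff b f u = D b"
  using frechet_derivative_at[OF assms] unfolding pdiff_def by simp

lemma Ck_on_cong:
  assumes "Ck_on k V f" "open V" "\<And>v. v \<in> V \<Longrightarrow> f v = g v"
  shows "Ck_on k V g"
  using assms
proof (induction k arbitrary: f g)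
  case 0
  then show ?case using continuous_on_cong by (metis Ck_on.simps(1))
next
  case (Suc k)
  show ?case unfolding Ck_on.simps
  proof safe
    fix u assume "u \<in> V"
    then show "g differentiable at u"
      using Suc.prems differentiable_cong_open[OF \<open>open V\<close> \<open>u \<in> V\<close>] by auto
  next
    fix b :: 'a assume b: "b \<in> Basis"
    have "Ck_on k V (pdiff b f)" using Suc.prems b by simp
    moreover have "\<And>v. v \<in> V \<Longrightarrow> pdiff b f v = pdiff b g v"
      using pdiff_cong_open[OF \<open>open V\<close>] Suc.prems by blast
    ultimately show "Ck_on k V (pdiff b g)" using Suc.IH \<open>open V\<close> by blast
  qed
qed

lemma Ck_on_Suc_mono: "Ck_on (Suc k) V f \<Longrightarrow> Ck_on k V f"
proof (induction k arbitrary: f)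
  case 0
  then show ?case
    by (auto intro!: continuous_at_imp_continuous_on differentiable_imp_continuous_within)
next
  case (Suc k)
  then show ?case by (simp del: Ck_on.simps(2) add: Ck_on.simps(2)[of "Suc k"]) (simp)
qed

lemma Ck_on_le: "m \<le> k \<Longrightarrow> Ck_on k V f \<Longrightarrow> Ck_on m V f"
proof (induction k)
  case 0 then show ?case by simp
next
  case (Suc k)
  show ?case
  proof (cases "m = Suc k")
    case True then show ?thesis using Suc by simp
  next
    case False then show ?thesis using Suc Ck_on_Suc_mono[of k V f] by simp
  qed
qed


lemma Ck_on_const: "Ck_on k V (\<lambda>_. c)"
proof (induction k arbitrary: c)
  case 0 then show ?case by simp
next
  case (Suc k)
  have "pdiff b (\<lambda>_. c) = (\<lambda>_. 0)" for b :: 'a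
    using pdiff_at[OF has_derivative_const] by fastforce
  then show ?case using Suc by simp
qed

lemma Ck_on_add:
  assumes "open V" "Ck_on k V f" "Ck_on k V g"
  shows "Ck_on k V (\<lambda>v. f v + g v)"
  using assms(2,3)
proof (induction k arbitrary: f g)
  case 0 then show ?case by (simp add: continuous_on_add)
next
  case (Suc k)
  show ?case unfolding Ck_on.simps
  proof safe
    fix u assume "u \<in> V" then show "(\<lambda>v. f v + g v) differentiable at u"
      using Suc.prems by auto
  next
    fix b :: 'a assume b: "b \<in> Basis"
    have "Ck_on k V (\<lambda>v. pdiff b f v + pdiff b g v)" using Suc b by simp
    moreover have "pdiff b f v + pdiff b g v = pdiff b (\<lambda>v. f v + g v) v" if v: "v \<in> V" for v
    proof -
      have "f differentiable at v" "g differentiable at v" using Suc.prems v by simp_all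
      then obtain F G where "(f has_derivative F) (at v)" "(g has_derivative G) (at v)"
        unfolding differentiable_def by auto
      then show ?thesis using pdiff_at has_derivative_add by metis
    qed
    ultimately show "Ck_on k V (pdiff b (\<lambda>v. f v + g v))"
      using Ck_on_cong[OF _ \<open>open V\<close>] by blast
  qed
qed

lemma Ck_on_linear:
  assumes "open V" "bounded_linear L" "Ck_on k V f"
  shows "Ck_on k V (\<lambda>v. L (f v))"
  using assms(3)
proof (induction k arbitrary: f)
  case 0 then show ?case
    using bounded_linear.continuous_on[OF assms(2)] by simp
next
  case (Suc k)
  show ?case unfolding Ck_on.simps
  proof safe
    fix u assume "u \<in> V" then show "(\<lambda>v. L (f v)) differentiable at u"
      using Suc.prems assms(2) by (auto intro: bounded_linear_imp_differentiable differentiable_chain_at[unfolded o_def])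
  next
    fix b :: 'a assume b: "b \<in> Basis"
    have "Ck_on k V (\<lambda>v. L (pdiff b f v))" using Suc b by simp
    moreover have "L (pdiff b f v) = pdiff b (\<lambda>v. L (f v)) v" if v: "v \<in> V" for v
    proof -
      have "f differentiable at v" using Suc.prems v by simp
      then obtain F where "(f has_derivative F) (at v)"
        unfolding differentiable_def by auto
      then show ?thesis using pdiff_at bounded_linear.has_derivative[OF assms(2)] by metis
    qed
    ultimately show "Ck_on k V (pdiff b (\<lambda>v. L (f v)))"
      using Ck_on_cong[OF _ \<open>open V\<close>] by blast
  qed
qed

lemma Ck_on_scaleR:
  fixes f :: "'a::euclidean_space \<Rightarrow> real" and g :: "'a \<Rightarrow> 'b::real_normed_vector"
  assumes "open V" "Ck_on k V f" "Ck_on k V g"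
  shows "Ck_on k V (\<lambda>v. f v *\<^sub>R g v)"
  using assms(2,3)
proof (induction k arbitrary: f g)
  case 0 then show ?case by (simp add: continuous_on_scaleR)
next
  case (Suc k)
  show ?case unfolding Ck_on.simps
  proof safe
    fix u assume "u \<in> V" then show "(\<lambda>v. f v *\<^sub>R g v) differentiable at u"
      using Suc.prems differentiable_scaleR[of f u UNIV g] by simp
  next
    fix b :: 'a assume b: "b \<in> Basis"
    have f1: "Ck_on k V f" "Ck_on k V g" using Suc.prems Ck_on_Suc_mono by blast+
    have p: "Ck_on k V (pdiff b f)" "Ck_on k V (pdiff b g)" using Suc.prems b by simp_all
    have "Ck_on k V (\<lambda>v. f v *\<^sub>R pdiff b g v + pdiff b f v *\<^sub>R g v)"
      by (rule Ck_on_add[OF \<open>open V\<close> Suc.IH[OF f1(1) p(2)] Suc.IH[OF p(1) f1(2)]])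
    moreover have "f v *\<^sub>R pdiff b g v + pdiff b f v *\<^sub>R g v = pdiff b (\<lambda>v. f v *\<^sub>R g v) v" if v: "v \<in> V" for v
    proof -
      have "f differentiable at v" "g differentiable at v" using Suc.prems v by simp_all
      then obtain F G where "(f has_derivative F) (at v)" "(g has_derivative G) (at v)"
        unfolding differentiable_def by auto
      then have "((\<lambda>v. f v *\<^sub>R g v) has_derivative (\<lambda>h. f v *\<^sub>R G h + F h *\<^sub>R g v)) (at v)"
        by (rule has_derivative_scaleR)
      from pdiff_at[OF this, of b] pdiff_at[OF \<open>(f has_derivative F) (at v)\<close>, of b]
        pdiff_at[OF \<open>(g has_derivative G) (at v)\<close>, of b]
      show ?thesis by simp
    qed
    ultimately show "Ck_on k V (pdiff b (\<lambda>v. f v *\<^sub>R g v))"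
      using Ck_on_cong[OF _ \<open>open V\<close>] by blast
  qed
qed

lemma Ck_on_mult:
  fixes f g :: "'a::euclidean_space \<Rightarrow> real"
  assumes "open V" "Ck_on k V f" "Ck_on k V g"
  shows "Ck_on k V (\<lambda>v. f v * g v)"
  using Ck_on_scaleR[OF assms] by (simp only: real_scaleR_def)

lemma Ck_on_inverse:
  fixes g :: "'a::euclidean_space \<Rightarrow> real"
  assumes "open V" "Ck_on k V g" "\<And>v. v \<in> V \<Longrightarrow> g v \<noteq> 0"
  shows "Ck_on k V (\<lambda>v. inverse (g v))"
  using assms(2)
proof (induction k)
  case 0
  have "\<forall>x\<in>V. g x \<noteq> 0" using assms(3) by blast
  then show ?case using 0 by (simp add: continuous_on_inverse)
next
  case (Suc k)
  show ?case unfolding Ck_on.simps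
  proof safe
    fix u assume "u \<in> V" then show "(\<lambda>v. inverse (g v)) differentiable at u"
    proof -
      have "g differentiable at u" using Suc.prems \<open>u \<in> V\<close> by simp
      then obtain G where G: "(g has_derivative G) (at u)" unfolding differentiable_def by auto
      show ?thesis using Deriv.has_derivative_inverse[OF assms(3)[OF \<open>u \<in> V\<close>] G] unfolding differentiable_def by blast
    qed
  next
    fix b :: 'a assume b: "b \<in> Basis"
    have g1: "Ck_on k V g" using Suc.prems Ck_on_Suc_mono by blast
    have i1: "Ck_on k V (\<lambda>v. inverse (g v))" using Suc.IH[OF g1] .
    have a: "Ck_on k V (pdiff b g)" using Suc.prems b by simp
    have m1: "Ck_on k V (\<lambda>v. inverse (g v) * inverse (g v))" using Ck_on_mult[OF \<open>open V\<close> i1 i1] .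
    have m2: "Ck_on k V (\<lambda>v. pdiff b g v * (inverse (g v) * inverse (g v)))"
      using Ck_on_mult[OF \<open>open V\<close> a m1] by simp
    have "Ck_on k V (\<lambda>v. - (pdiff b g v * (inverse (g v) * inverse (g v))))"
      using Ck_on_linear[OF \<open>open V\<close> bounded_linear_minus[OF bounded_linear_ident] m2] by simp
    moreover have "- (pdiff b g v * (inverse (g v) * inverse (g v))) = pdiff b (\<lambda>v. inverse (g v)) v" if v: "v \<in> V" for v
    proof -
      have "g differentiable at v" using Suc.prems v by simp_all
      then obtain G where G: "(g has_derivative G) (at v)"
        unfolding differentiable_def by auto
      have "pdiff b (\<lambda>v. inverse (g v)) v = - (inverse (g v) * G b * inverse (g v))"
        using pdiff_at[OF Deriv.has_derivative_inverse[OF assms(3)[OF v] G]] .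
      moreover have "pdiff b g v = G b" using pdiff_at[OF G] .
      ultimately show ?thesis by (simp add: algebra_simps)
    qed
    ultimately show "Ck_on k V (pdiff b (\<lambda>v. inverse (g v)))"
      using Ck_on_cong[OF _ \<open>open V\<close>] by blast
  qed
qed

lemma Ck_on_subset:
  assumes "Ck_on k V f" "V' \<subseteq> V"
  shows "Ck_on k V' f"
  using assms
proof (induction k arbitrary: f)
  case 0 then show ?case using continuous_on_subset by auto
next
  case (Suc k) then show ?case by auto
qed

lemma smooth_on_const: "smooth_on V (\<lambda>_. c)"
  unfolding smooth_on_def using Ck_on_const by blast

lemma smooth_on_add: "open V \<Longrightarrow> smooth_on V f \<Longrightarrow> smooth_on V g \<Longrightarrow> smooth_on V (\<lambda>v. f v + g v)"
  unfolding smooth_on_def using Ck_on_add by blast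

lemma smooth_on_linear: "open V \<Longrightarrow> bounded_linear L \<Longrightarrow> smooth_on V f \<Longrightarrow> smooth_on V (\<lambda>v. L (f v))"
  unfolding smooth_on_def using Ck_on_linear by blast

lemma smooth_on_scaleR:
  fixes f :: "'a::euclidean_space \<Rightarrow> real" and g :: "'a \<Rightarrow> 'b::real_normed_vector"
  shows "open V \<Longrightarrow> smooth_on V f \<Longrightarrow> smooth_on V g \<Longrightarrow> smooth_on V (\<lambda>v. f v *\<^sub>R g v)"
  unfolding smooth_on_def using Ck_on_scaleR by blast

lemma smooth_on_mult:
  fixes f g :: "'a::euclidean_space \<Rightarrow> real"
  shows "open V \<Longrightarrow> smooth_on V f \<Longrightarrow> smooth_on V g \<Longrightarrow> smooth_on V (\<lambda>v. f v * g v)"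
  unfolding smooth_on_def using Ck_on_mult by blast

lemma smooth_on_inverse:
  fixes g :: "'a::euclidean_space \<Rightarrow> real"
  shows "open V \<Longrightarrow> smooth_on V g \<Longrightarrow> (\<And>v. v \<in> V \<Longrightarrow> g v \<noteq> 0) \<Longrightarrow> smooth_on V (\<lambda>v. inverse (g v))"
  unfolding smooth_on_def using Ck_on_inverse by blast

lemma smooth_on_subset: "smooth_on V f \<Longrightarrow> V' \<subseteq> V \<Longrightarrow> smooth_on V' f"
  unfolding smooth_on_def using Ck_on_subset by blast

lemma smooth_on_cong: "smooth_on V f \<Longrightarrow> open V \<Longrightarrow> (\<And>v. v \<in> V \<Longrightarrow> f v = g v) \<Longrightarrow> smooth_on V g"
  unfolding smooth_on_def using Ck_on_cong by blast

lemma smooth_on_pdiff: "smooth_on V f \<Longrightarrow> b \<in> Basis \<Longrightarrow> smooth_on V (pdiff b f)"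
  unfolding smooth_on_def by (metis Ck_on.simps(2))

lemma smooth_on_differentiable: "smooth_on V f \<Longrightarrow> u \<in> V \<Longrightarrow> f differentiable (at u)"
  unfolding smooth_on_def by (metis Ck_on.simps(2))

lemma smooth_on_continuous: "smooth_on V f \<Longrightarrow> continuous_on V f"
  unfolding smooth_on_def by (metis Ck_on.simps(1))

lemma smooth_on_diff: "open V \<Longrightarrow> smooth_on V f \<Longrightarrow> smooth_on V g \<Longrightarrow> smooth_on V (\<lambda>v. f v - g v)"
proof -
  assume a: "open V" "smooth_on V f" "smooth_on V g"
  have "smooth_on V (\<lambda>v. - g v)" using smooth_on_linear[OF a(1) bounded_linear_minus[OF bounded_linear_ident] a(3)] .
  from smooth_on_add[OF a(1,2) this] show ?thesis by simp
qed


definition pd :: "'a::euclidean_space list \<Rightarrow> ('a \<Rightarrow> 'b::real_normed_vector) \<Rightarrow> 'a \<Rightarrow> 'b" where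
  "pd bs f = foldr pdiff bs f"

lemma pd_Nil[simp]: "pd [] f = f" by (simp add: pd_def)
lemma pd_Cons[simp]: "pd (b # bs) f = pdiff b (pd bs f)" by (simp add: pd_def)
lemma pd_append: "pd (xs @ ys) f = pd xs (pd ys f)" by (simp add: pd_def)

lemma smooth_on_pd: "smooth_on V f \<Longrightarrow> set bs \<subseteq> Basis \<Longrightarrow> smooth_on V (pd bs f)"
  by (induction bs) (auto intro: smooth_on_pdiff)

lemma pd_cong:
  assumes "open V" "\<And>v. v \<in> V \<Longrightarrow> f v = g v" "u \<in> V"
  shows "pd bs f u = pd bs g u"
  using assms(3)
proof (induction bs arbitrary: u)
  case Nil then show ?case using assms(2) by simp
next
  case (Cons b bs)
  then show ?case using pdiff_cong_open[OF assms(1) Cons.prems, of "pd bs f" "pd bs g"] by simp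
qed

lemma pdiff_add:
  assumes "f differentiable (at u)" "g differentiable (at u)"
  shows "pdiff b (\<lambda>v. f v + g v) u = pdiff b f u + pdiff b g u"
proof -
  obtain F G where "(f has_derivative F) (at u)" "(g has_derivative G) (at u)"
    using assms unfolding differentiable_def by auto
  then show ?thesis using pdiff_at has_derivative_add by metis
qed

lemma pdiff_linear:
  assumes "f differentiable (at u)" "bounded_linear L"
  shows "pdiff b (\<lambda>v. L (f v)) u = L (pdiff b f u)"
proof -
  obtain F where "(f has_derivative F) (at u)"
    using assms unfolding differentiable_def by auto
  then show ?thesis using pdiff_at bounded_linear.has_derivative[OF assms(2)] by metis
qed

lemma pd_add:
  assumes "open V" "smooth_on V f" "smooth_on V g" "set bs \<subseteq> Basis" "u \<in> V"
  shows "pd bs (\<lambda>v. f v + g v) u = pd bs f u + pd bs g u"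
  using assms(4,5)
proof (induction bs arbitrary: u)
  case Nil then show ?case by simp
next
  case (Cons b bs)
  have "pd (b # bs) (\<lambda>v. f v + g v) u = pdiff b (\<lambda>v. pd bs f v + pd bs g v) u"
    using pdiff_cong_open[OF assms(1) Cons.prems(2), of "pd bs (\<lambda>v. f v + g v)"] Cons by simp
  also have "\<dots> = pdiff b (pd bs f) u + pdiff b (pd bs g) u"
    using Cons.prems smooth_on_pd[OF assms(2)] smooth_on_pd[OF assms(3)]
    by (intro pdiff_add) (auto intro: smooth_on_differentiable)
  finally show ?case by simp
qed

lemma pd_linear:
  assumes "open V" "smooth_on V f" "bounded_linear L" "set bs \<subseteq> Basis" "u \<in> V"
  shows "pd bs (\<lambda>v. L (f v)) u = L (pd bs f u)"
  using assms(4,5)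
proof (induction bs arbitrary: u)
  case Nil then show ?case by simp
next
  case (Cons b bs)
  have "pd (b # bs) (\<lambda>v. L (f v)) u = pdiff b (\<lambda>v. L (pd bs f v)) u"
    using pdiff_cong_open[OF assms(1) Cons.prems(2), of "pd bs (\<lambda>v. L (f v))"] Cons by simp
  also have "\<dots> = L (pdiff b (pd bs f) u)"
    using Cons.prems smooth_on_pd[OF assms(2)]
    by (intro pdiff_linear assms(3)) (auto intro: smooth_on_differentiable)
  finally show ?case by simp
qed

lemma pd_const:
  assumes "bs \<noteq> []"
  shows "pd bs (\<lambda>_. c) u = 0"
  using assms
proof (induction bs arbitrary: u)
  case Nil then show ?case by simp
next
  case (Cons b bs)
  show ?case
  proof (cases "bs = []")
    case True then show ?thesis using pdiff_at[OF has_derivative_const] by simp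
  next
    case False
    then have "pd bs (\<lambda>_. c) = (\<lambda>_. 0)" using Cons by auto
    then show ?thesis using pdiff_at[OF has_derivative_const] by simp
  qed
qed

lemma smooth_on_sum:
  assumes "open V" "finite I" "\<And>i. i \<in> I \<Longrightarrow> smooth_on V (f i)"
  shows "smooth_on V (\<lambda>v. \<Sum>i\<in>I. f i v)"
  using assms(2,3)
proof (induction I rule: finite_induct)
  case empty then show ?case by (simp add: smooth_on_const)
next
  case (insert x F) then show ?case by (simp add: smooth_on_add[OF assms(1)])
qed

lemma pd_sum:
  assumes "open V" "finite I" "\<And>i. i \<in> I \<Longrightarrow> smooth_on V (f i)" "set bs \<subseteq> Basis" "u \<in> V"
  shows "pd bs (\<lambda>v. \<Sum>i\<in>I. f i v) u = (\<Sum>i\<in>I. pd bs (f i) u)"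
  using assms(2,3)
proof (induction I rule: finite_induct)
  case empty then show ?case by (cases "bs = []") (simp_all add: pd_const)
next
  case (insert x F)
  then show ?case
    using pd_add[OF assms(1) _ smooth_on_sum[OF assms(1) insert(1)] assms(4,5), of "f x" f]
    by simp
qed

lemma pd_scaleR:
  assumes "open V" "smooth_on V f" "set bs \<subseteq> Basis" "u \<in> V"
  shows "pd bs (\<lambda>v. c *\<^sub>R f v) u = c *\<^sub>R pd bs f u"
  using pd_linear[OF assms(1,2) bounded_linear_scaleR_right assms(3,4)] .

lemma pd_diff:
  assumes "open V" "smooth_on V f" "smooth_on V g" "set bs \<subseteq> Basis" "u \<in> V"
  shows "pd bs (\<lambda>v. f v - g v) u = pd bs f u - pd bs g u"
proof -
  have "smooth_on V (\<lambda>v. - g v)"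
    using smooth_on_linear[OF assms(1) bounded_linear_minus[OF bounded_linear_ident] assms(3)] .
  then show ?thesis
    using pd_add[OF assms(1,2) _ assms(4,5), of "\<lambda>v. - g v"]
      pd_linear[OF assms(1,3) bounded_linear_minus[OF bounded_linear_ident] assms(4,5)]
    by simp
qed

definition e3 :: "nat \<Rightarrow> real^3" where "e3 i = axis (of_nat i) 1"

definition mlist :: "nat \<times> nat \<times> nat \<Rightarrow> (real^3) list" where
  "mlist \<alpha> = (case \<alpha> of (a,b,c) \<Rightarrow> replicate a (axis 1 1) @ replicate b (axis 2 1) @ replicate c (axis 3 1))"

lemma Dmulti_pd: "Dmulti \<alpha> f = pd (mlist \<alpha>) f"
  by (cases \<alpha>) (simp add: Dmulti_def mlist_def pd_append pd_def)

lemma mlist_Basis: "set (mlist \<alpha>) \<subseteq> Basis"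
  by (cases \<alpha>) (auto simp: mlist_def)

lemma length_mlist: "length (mlist (a,b,c)) = a + b + c"
  by (simp add: mlist_def)

lemma Dmulti_0[simp]: "Dmulti (0,0,0) f = f"
  by (simp add: Dmulti_def)

fun sumbl :: "nat \<Rightarrow> (bool list \<Rightarrow> 'a::comm_monoid_add) \<Rightarrow> 'a" where
  "sumbl 0 F = F []"
| "sumbl (Suc n) F = sumbl n (\<lambda>ms. F (True # ms)) + sumbl n (\<lambda>ms. F (False # ms))"

fun sel :: "bool list \<Rightarrow> 'a list \<Rightarrow> 'a list" where
  "sel [] bs = []"
| "sel (m # ms) [] = []"
| "sel (m # ms) (b # bs) = (if m then b # sel ms bs else sel ms bs)"

lemma sumbl_add: "sumbl n (\<lambda>ms. A ms + B ms) = sumbl n A + sumbl n B"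
  by (induction n arbitrary: A B) (simp_all add: algebra_simps)

lemma sumbl_mono:
  fixes A B :: "bool list \<Rightarrow> real"
  shows "(\<And>ms. A ms \<le> B ms) \<Longrightarrow> sumbl n A \<le> sumbl n B"
  by (induction n arbitrary: A B) (simp_all add: add_mono)

lemma sumbl_cmult:
  fixes A :: "bool list \<Rightarrow> real"
  shows "sumbl n (\<lambda>ms. c * A ms) = c * sumbl n A"
  by (induction n arbitrary: A) (simp_all add: algebra_simps)

lemma norm_sumbl: "norm (sumbl n A) \<le> sumbl n (\<lambda>ms. norm (A ms))"
proof (induction n arbitrary: A)
  case 0 then show ?case by simp
next
  case (Suc n)
  then show ?case by (simp add: norm_triangle_le add_mono)
qed

lemma has_derivative_sumbl:
  assumes "\<And>ms. (T ms has_derivative D ms) (at u)"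
  shows "((\<lambda>v. sumbl n (\<lambda>ms. T ms v)) has_derivative (\<lambda>h. sumbl n (\<lambda>ms. D ms h))) (at u)"
  using assms
proof (induction n arbitrary: T D)
  case 0 then show ?case by simp
next
  case (Suc n)
  have "((\<lambda>v. sumbl n (\<lambda>ms. T (True # ms) v) + sumbl n (\<lambda>ms. T (False # ms) v)) has_derivative
        (\<lambda>h. sumbl n (\<lambda>ms. D (True # ms) h) + sumbl n (\<lambda>ms. D (False # ms) h))) (at u)"
    by (intro has_derivative_add Suc.IH Suc.prems)
  then show ?case by simp
qed

lemma pdiff_sumbl:
  assumes "\<And>ms. T ms differentiable (at u)"
  shows "pdiff b (\<lambda>v. sumbl n (\<lambda>ms. T ms v)) u = sumbl n (\<lambda>ms. pdiff b (T ms) u)"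
proof -
  obtain D where D: "\<And>ms. (T ms has_derivative D ms) (at u)"
    using assms unfolding differentiable_def by metis
  show ?thesis using pdiff_at[OF has_derivative_sumbl[OF D]] pdiff_at[OF D] by simp
qed

lemma pdiff_scaleR:
  fixes f :: "'a::euclidean_space \<Rightarrow> real"
  assumes "f differentiable (at u)" "g differentiable (at u)"
  shows "pdiff b (\<lambda>v. f v *\<^sub>R g v) u = f u *\<^sub>R pdiff b g u + pdiff b f u *\<^sub>R g u"
proof -
  obtain F G where FG: "(f has_derivative F) (at u)" "(g has_derivative G) (at u)"
    using assms unfolding differentiable_def by auto
  then have "((\<lambda>v. f v *\<^sub>R g v) has_derivative (\<lambda>h. f u *\<^sub>R G h + F h *\<^sub>R g u)) (at u)"
    by (rule has_derivative_scaleR)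
  from pdiff_at[OF this, of b] pdiff_at[OF FG(1), of b] pdiff_at[OF FG(2), of b]
  show ?thesis by simp
qed

lemma set_sel: "set (sel ms bs) \<subseteq> set bs"
  by (induction ms bs rule: sel.induct) auto

lemma leibniz:
  fixes f :: "'a::euclidean_space \<Rightarrow> real" and r :: "'a \<Rightarrow> 'b::real_normed_vector"
  assumes "open V" "smooth_on V f" "smooth_on V r" "set bs \<subseteq> Basis" "u \<in> V"
  shows "pd bs (\<lambda>v. f v *\<^sub>R r v) u =
         sumbl (length bs) (\<lambda>ms. pd (sel ms bs) f u *\<^sub>R pd (sel (map Not ms) bs) r u)"
  using assms(4,5)
proof (induction bs arbitrary: u)
  case Nil then show ?case by simp
next
  case (Cons b bs)
  let ?T = "\<lambda>ms v. pd (sel ms bs) f v *\<^sub>R pd (sel (map Not ms) bs) r v"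
  have sm: "smooth_on V (pd (sel ms bs) f)" "smooth_on V (pd (sel (map Not ms) bs) r)" for ms
    using Cons.prems set_sel[of ms bs] set_sel[of "map Not ms" bs] by (auto intro!: smooth_on_pd assms)
  have "pd (b # bs) (\<lambda>v. f v *\<^sub>R r v) u = pdiff b (\<lambda>v. sumbl (length bs) (\<lambda>ms. ?T ms v)) u"
    using pdiff_cong_open[OF assms(1) Cons.prems(2), of "pd bs (\<lambda>v. f v *\<^sub>R r v)"] Cons by simp
  also have "\<dots> = sumbl (length bs) (\<lambda>ms. pdiff b (?T ms) u)"
    using sm Cons.prems
    by (intro pdiff_sumbl differentiable_scaleR) (auto intro: smooth_on_differentiable)
  also have "\<dots> = sumbl (length bs) (\<lambda>ms. pd (sel (True # ms) (b # bs)) f u *\<^sub>R pd (sel (map Not (True # ms)) (b # bs)) r u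
        + pd (sel (False # ms) (b # bs)) f u *\<^sub>R pd (sel (map Not (False # ms)) (b # bs)) r u)"
  proof -
    have pe: "pdiff b (?T ms) u = pd (sel ms bs) f u *\<^sub>R pdiff b (pd (sel (map Not ms) bs) r) u +
             pdiff b (pd (sel ms bs) f) u *\<^sub>R pd (sel (map Not ms) bs) r u" for ms
      using pdiff_scaleR[OF smooth_on_differentiable[OF sm(1) Cons.prems(2)] smooth_on_differentiable[OF sm(2) Cons.prems(2)]] .
    show ?thesis by (simp add: pe add.commute)
  qed
  also have "\<dots> = sumbl (length (b # bs)) (\<lambda>ms. pd (sel ms (b # bs)) f u *\<^sub>R pd (sel (map Not ms) (b # bs)) r u)"
    by (simp add: sumbl_add)
  finally show ?case .
qed

lemma sel_Nil2[simp]: "sel ms [] = []" by (cases ms) auto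

lemma sel_append: "sel ms (xs @ ys) = sel (take (length xs) ms) xs @ sel (drop (length xs) ms) ys"
proof (induction xs arbitrary: ms)
  case Nil then show ?case by simp
next
  case (Cons x xs) then show ?case by (cases ms) auto
qed

lemma sel_replicate: "\<exists>m\<le>n. sel ms (replicate n x) = replicate m x"
proof (induction n arbitrary: ms)
  case 0 then show ?case by simp
next
  case (Suc n)
  show ?case
  proof (cases ms)
    case Nil then show ?thesis by simp
  next
    case (Cons m ms')
    obtain k where "k \<le> n" "sel ms' (replicate n x) = replicate k x" using Suc by blast
    then show ?thesis using Cons by (cases m) (auto intro: exI[of _ "Suc k"] exI[of _ k])
  qed
qed

lemma sel_mlist: "\<exists>a' b' c'. a' \<le> a \<and> b' \<le> b \<and> c' \<le> c \<and> sel ms (mlist (a,b,c)) = mlist (a',b',c')"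
proof -
  let ?ms1 = "drop a ms"
  obtain a' where a': "a' \<le> a" "sel (take a ms) (replicate a (axis 1 1 :: real^3)) = replicate a' (axis 1 1)"
    using sel_replicate[where n=a and ms="take a ms" and x="axis 1 1 :: real^3"] by blast
  obtain b' where b': "b' \<le> b" "sel (take b ?ms1) (replicate b (axis 2 1 :: real^3)) = replicate b' (axis 2 1)"
    using sel_replicate[where n=b and ms="take b ?ms1" and x="axis 2 1 :: real^3"] by blast
  obtain c' where c': "c' \<le> c" "sel (drop b ?ms1) (replicate c (axis 3 1 :: real^3)) = replicate c' (axis 3 1)"
    using sel_replicate[where n=c and ms="drop b ?ms1" and x="axis 3 1 :: real^3"] by blast
  have "sel ms (mlist (a,b,c)) = mlist (a',b',c')"
    unfolding mlist_def prod.case sel_append length_replicate a'(2) b'(2) c'(2) ..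
  then show ?thesis using a'(1) b'(1) c'(1) by blast
qed


lemma leibniz_bound:
  fixes f :: "real^3 \<Rightarrow> real" and r :: "real^3 \<Rightarrow> 'b::real_normed_vector"
  assumes "open V" "smooth_on V f" "smooth_on V r" "u \<in> V"
    and "\<And>a' b' c'. a' \<le> a \<Longrightarrow> b' \<le> b \<Longrightarrow> c' \<le> c \<Longrightarrow> \<bar>Dmulti (a',b',c') f u\<bar> \<le> \<eta>"
  shows "norm (Dmulti (a,b,c) (\<lambda>v. f v *\<^sub>R r v) u) \<le>
         \<eta> * sumbl (a+b+c) (\<lambda>ms. norm (pd (sel (map Not ms) (mlist (a,b,c))) r u))"
proof -
  have "norm (Dmulti (a,b,c) (\<lambda>v. f v *\<^sub>R r v) u) =
     norm (sumbl (a+b+c) (\<lambda>ms. pd (sel ms (mlist (a,b,c))) f u *\<^sub>R pd (sel (map Not ms) (mlist (a,b,c))) r u))"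
    unfolding Dmulti_pd using leibniz[OF assms(1-3) mlist_Basis assms(4)] by (simp add: length_mlist)
  also have "\<dots> \<le> sumbl (a+b+c) (\<lambda>ms. norm (pd (sel ms (mlist (a,b,c))) f u *\<^sub>R pd (sel (map Not ms) (mlist (a,b,c))) r u))"
    by (rule norm_sumbl)
  also have "\<dots> \<le> sumbl (a+b+c) (\<lambda>ms. \<eta> * norm (pd (sel (map Not ms) (mlist (a,b,c))) r u))"
  proof (rule sumbl_mono)
    fix ms
    obtain a' b' c' where abc: "a' \<le> a" "b' \<le> b" "c' \<le> c" "sel ms (mlist (a,b,c)) = mlist (a',b',c')"
      using sel_mlist by blast
    have "\<bar>pd (sel ms (mlist (a,b,c))) f u\<bar> \<le> \<eta>"
      using assms(5)[OF abc(1-3)] abc(4) by (simp add: Dmulti_pd)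
    then show "norm (pd (sel ms (mlist (a,b,c))) f u *\<^sub>R pd (sel (map Not ms) (mlist (a,b,c))) r u)
       \<le> \<eta> * norm (pd (sel (map Not ms) (mlist (a,b,c))) r u)"
      by (simp add: mult_right_mono)
  qed
  also have "\<dots> = \<eta> * sumbl (a+b+c) (\<lambda>ms. norm (pd (sel (map Not ms) (mlist (a,b,c))) r u))"
    by (rule sumbl_cmult)
  finally show ?thesis .
qed

lemma vector_4 [simp]:
 "(vector [x,y,z,w] ::('a::zero)^4)$1 = x"
 "(vector [x,y,z,w] ::('a::zero)^4)$2 = y"
 "(vector [x,y,z,w] ::('a::zero)^4)$3 = z"
 "(vector [x,y,z,w] ::('a::zero)^4)$4 = w"
  unfolding vector_def by simp_all

lemma bounded_linear_forget: "bounded_linear (forget_coord j)"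
proof -
  have "linear (forget_coord j)"
    by (rule linearI) (auto simp: forget_coord_def vec_eq_iff forall_3)
  then show ?thesis using linear_conv_bounded_linear by blast
qed

definition ins_coord :: "4 \<Rightarrow> real^3 \<Rightarrow> real^4" where
  "ins_coord j w =
     (if j = 1 then vector [0, w$1, w$2, w$3]
      else if j = 2 then vector [w$1, 0, w$2, w$3]
      else if j = 3 then vector [w$1, w$2, 0, w$3]
      else vector [w$1, w$2, w$3, 0])"

lemma bounded_linear_ins: "bounded_linear (ins_coord j)"
proof -
  have "linear (ins_coord j)"
    by (rule linearI) (auto simp: ins_coord_def vec_eq_iff forall_4)
  then show ?thesis using linear_conv_bounded_linear by blast
qed

lemma forget_ins[simp]: "forget_coord j (ins_coord j w) = w"
  using exhaust_4[of j] by (auto simp: forget_coord_def ins_coord_def vec_eq_iff forall_3)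

lemma ins_j[simp]: "ins_coord j w $ j = 0"
  using exhaust_4[of j] by (auto simp: ins_coord_def)


definition Gf :: "4 \<Rightarrow> (real^3 \<Rightarrow> real^4) \<Rightarrow> (real^3 \<Rightarrow> real^4) \<Rightarrow> real^3 \<Rightarrow> real \<Rightarrow> real \<Rightarrow> real^3 \<Rightarrow> real^3" where
  "Gf j x \<xi> u0 t0 s = (\<lambda>v. forget_coord j (Ftilde j x \<xi> u0 t0 (v, s)))"

definition rr :: "4 \<Rightarrow> (real^3 \<Rightarrow> real^4) \<Rightarrow> real^3 \<Rightarrow> real^3" where
  "rr j \<xi> v = inverse (\<xi> v $ j) *\<^sub>R forget_coord j (\<xi> v)"

lemma lin_forget: "linear (forget_coord j)"
  using bounded_linear.linear[OF bounded_linear_forget] .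

lemma forget_add: "forget_coord j (a + b) = forget_coord j a + forget_coord j b"
  using linear_add[OF lin_forget] .
lemma forget_diff: "forget_coord j (a - b) = forget_coord j a - forget_coord j b"
  using linear_diff[OF lin_forget] .
lemma forget_scale: "forget_coord j (c *\<^sub>R a) = c *\<^sub>R forget_coord j a"
  using linear_scale[OF lin_forget] .

lemma Gf_eq: "Gf j x \<xi> u0 t0 s v = forget_coord j (x v) + c_fun j x \<xi> u0 t0 v *\<^sub>R forget_coord j (\<xi> v) + s *\<^sub>R forget_coord j (\<xi> v)"
  by (simp add: Gf_def Ftilde_def forget_add forget_scale)

lemma Gf_diff: "Gf j x' \<xi> u0 t0 0 v - Gf j x \<xi> u0 t0 0 v =
   forget_coord j (x' v - x v) - ((x' v - x v) $ j - (x' u0 - x u0) $ j) *\<^sub>R rr j \<xi> v"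
proof -
  have "c_fun j x' \<xi> u0 t0 v - c_fun j x \<xi> u0 t0 v = - (((x' v - x v) $ j - (x' u0 - x u0) $ j) * inverse (\<xi> v $ j))"
    by (simp add: c_fun_def a_const_def divide_inverse algebra_simps)
  then have "c_fun j x' \<xi> u0 t0 v *\<^sub>R forget_coord j (\<xi> v) - c_fun j x \<xi> u0 t0 v *\<^sub>R forget_coord j (\<xi> v)
      = - (((x' v - x v) $ j - (x' u0 - x u0) $ j) *\<^sub>R rr j \<xi> v)"
    by (simp add: rr_def scaleR_left_diff_distrib[symmetric])
  then show ?thesis
    by (simp add: Gf_eq algebra_simps forget_diff)
qed

definition Vj :: "(real^3) set \<Rightarrow> (real^3 \<Rightarrow> real^4) \<Rightarrow> 4 \<Rightarrow> (real^3) set" where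
  "Vj U \<xi> j = {v \<in> U. \<xi> v $ j \<noteq> 0}"

lemma open_Vj: "open U \<Longrightarrow> smooth_on U \<xi> \<Longrightarrow> open (Vj U \<xi> j)"
proof -
  assume a: "open U" "smooth_on U \<xi>"
  have "continuous_on U (\<lambda>v. \<xi> v $ j)"
    using bounded_linear.continuous_on[OF bounded_linear_vec_nth smooth_on_continuous[OF a(2)]] .
  from continuous_open_preimage[OF this a(1), of "-{0}"]
  have "open (U \<inter> (\<lambda>v. \<xi> v $ j) -` (-{0}))" by auto
  moreover have "U \<inter> (\<lambda>v. \<xi> v $ j) -` (-{0}) = Vj U \<xi> j" by (auto simp: Vj_def)
  ultimately show ?thesis by simp
qed

lemma Vj_sub: "Vj U \<xi> j \<subseteq> U" by (auto simp: Vj_def)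

lemma smooth_comp:
  "open V \<Longrightarrow> smooth_on V x \<Longrightarrow> smooth_on V (\<lambda>v. x v $ j)"
  using smooth_on_linear[OF _ bounded_linear_vec_nth] by blast

lemma smooth_rr:
  assumes "open U" "smooth_on U \<xi>"
  shows "smooth_on (Vj U \<xi> j) (rr j \<xi>)"
proof -
  let ?V = "Vj U \<xi> j"
  have o: "open ?V" using open_Vj[OF assms] .
  have s: "smooth_on ?V \<xi>" using smooth_on_subset[OF assms(2) Vj_sub] .
  have "smooth_on ?V (\<lambda>v. inverse (\<xi> v $ j))"
    using smooth_on_inverse[OF o smooth_comp[OF o s]] by (auto simp: Vj_def)
  moreover have "smooth_on ?V (\<lambda>v. forget_coord j (\<xi> v))"
    using smooth_on_linear[OF o bounded_linear_forget s] .
  ultimately show ?thesis unfolding rr_def[abs_def] using smooth_on_scaleR[OF o] by blast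
qed

lemma smooth_Gf:
  assumes "open U" "smooth_on U \<xi>" "smooth_on U x"
  shows "smooth_on (Vj U \<xi> j) (Gf j x \<xi> u0 t0 s)"
proof -
  let ?V = "Vj U \<xi> j"
  have o: "open ?V" using open_Vj[OF assms(1,2)] .
  have s: "smooth_on ?V \<xi>" using smooth_on_subset[OF assms(2) Vj_sub] .
  have sx: "smooth_on ?V x" using smooth_on_subset[OF assms(3) Vj_sub] .
  have i: "smooth_on ?V (\<lambda>v. inverse (\<xi> v $ j))"
    using smooth_on_inverse[OF o smooth_comp[OF o s]] by (auto simp: Vj_def)
  have "smooth_on ?V (\<lambda>v. - (x v $ j - a_const j x \<xi> u0 t0))"
    using smooth_on_linear[OF o bounded_linear_minus[OF bounded_linear_ident]
        smooth_on_diff[OF o smooth_comp[OF o sx] smooth_on_const]] by simp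
  then have c: "smooth_on ?V (c_fun j x \<xi> u0 t0)"
    using smooth_on_mult[OF o _ i] unfolding c_fun_def[abs_def] divide_inverse by blast
  have f1: "smooth_on ?V (\<lambda>v. forget_coord j (x v))"
    using smooth_on_linear[OF o bounded_linear_forget sx] .
  have f2: "smooth_on ?V (\<lambda>v. forget_coord j (\<xi> v))"
    using smooth_on_linear[OF o bounded_linear_forget s] .
  have "smooth_on ?V (\<lambda>v. forget_coord j (x v) + c_fun j x \<xi> u0 t0 v *\<^sub>R forget_coord j (\<xi> v) + s *\<^sub>R forget_coord j (\<xi> v))"
    by (intro smooth_on_add[OF o] smooth_on_scaleR[OF o] f1 f2 c smooth_on_const)
  then show ?thesis unfolding Gf_eq[abs_def] .
qed


lemma sumbl_nonneg:
  fixes A :: "bool list \<Rightarrow> real"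
  shows "(\<And>ms. 0 \<le> A ms) \<Longrightarrow> 0 \<le> sumbl n A"
  by (induction n arbitrary: A) simp_all

lemma jet_nth: "idx m = ((a,b,c),i) \<Longrightarrow> jet idx g u $ m = Dmulti (a,b,c) g u $ i / (fact a * fact b * fact c)"
  by (simp add: jet_def)

lemma Cinf_smooth: "x \<in> Cinf U \<Longrightarrow> smooth_on U x"
  by (simp add: Cinf_def)

lemma idx_k:
  assumes "bij_betw idx UNIV (jet_index k)" "idx m = ((a,b,c),i)"
  shows "a + b + c \<le> k" "1 \<le> a + b + c"
proof -
  have "idx m \<in> jet_index k" using bij_betwE[OF assms(1)] by blast
  then show "a + b + c \<le> k" "1 \<le> a + b + c" using assms(2) unfolding jet_index_def by auto
qed

lemma Dmulti_f_bound:
  assumes "open V" "smooth_on V d" "u0 \<in> V"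
    and "norm (Dmulti (a,b,c) d u0) < \<eta>"
  shows "\<bar>Dmulti (a,b,c) (\<lambda>v. (d v - d u0) $ j) u0\<bar> \<le> \<eta>"
proof (cases "a + b + c = 0")
  case True
  have "0 \<le> \<eta>" using assms(4) norm_ge_zero[of "Dmulti (a,b,c) d u0"] by linarith
  then show ?thesis using True by simp
next
  case False
  then have ne: "mlist (a,b,c) \<noteq> []" using length_mlist[of a b c] by auto
  have "Dmulti (a,b,c) (\<lambda>v. (d v - d u0) $ j) u0 = pd (mlist (a,b,c)) (\<lambda>v. d v - d u0) u0 $ j"
    unfolding Dmulti_pd
    using pd_linear[OF assms(1) smooth_on_diff[OF assms(1,2) smooth_on_const] bounded_linear_vec_nth mlist_Basis assms(3)]
    by simp
  also have "\<dots> = pd (mlist (a,b,c)) d u0 $ j"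
    using pd_diff[OF assms(1,2) smooth_on_const mlist_Basis assms(3)] pd_const[OF ne, of "d u0" u0] by simp
  finally have "\<bar>Dmulti (a,b,c) (\<lambda>v. (d v - d u0) $ j) u0\<bar> \<le> norm (Dmulti (a,b,c) d u0)"
    using component_le_norm_cart by (metis Dmulti_pd)
  then show ?thesis using assms(4) by simp
qed

lemma jet_cont:
  fixes idx :: "'j::finite \<Rightarrow> (nat \<times> nat \<times> nat) \<times> 3"
  assumes U: "open U" and xi: "smooth_on U \<xi>" and u0: "u0 \<in> U" "\<xi> u0 $ j \<noteq> 0"
    and idx: "bij_betw idx UNIV (jet_index k)" and x: "x \<in> Cinf U" and e: "\<epsilon> > 0"
  shows "\<exists>\<eta>>0. \<forall>x'\<in>Cinf U. x' \<in> whitney_nbhd U x k (\<lambda>_. \<eta>) \<longrightarrow>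
            norm (jet idx (Gf j x' \<xi> u0 t0 0) u0 - jet idx (Gf j x \<xi> u0 t0 0) u0) < \<epsilon>"
proof -
  define V where "V = Vj U \<xi> j"
  have oV: "open V" using open_Vj[OF U xi] V_def by simp
  have u0V: "u0 \<in> V" using u0 by (simp add: V_def Vj_def)
  have VU: "V \<subseteq> U" using Vj_sub V_def by simp
  have srr: "smooth_on V (rr j \<xi>)" using smooth_rr[OF U xi] V_def by simp
  obtain Kp where Kp: "Kp > 0" "\<And>y. norm (forget_coord j y) \<le> norm y * Kp"
    using bounded_linear.pos_bounded[OF bounded_linear_forget] by blast
  define C where "C m = (case idx m of ((a,b,c),i) \<Rightarrow>
      sumbl (a+b+c) (\<lambda>ms. norm (pd (sel (map Not ms) (mlist (a,b,c))) (rr j \<xi>) u0)))" for m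
  have C0: "C m \<ge> 0" for m
    unfolding C_def by (auto split: prod.split intro: sumbl_nonneg)
  define S where "S = (\<Sum>m\<in>UNIV. Kp + C m)"
  have S0: "S \<ge> 0" unfolding S_def using C0 Kp(1) by (simp add: sum_nonneg add_nonneg_nonneg)
  define \<eta> where "\<eta> = \<epsilon> / (S + 1)"
  have eta: "\<eta> > 0" using e S0 by (simp add: \<eta>_def)
  show ?thesis
  proof (intro exI[of _ \<eta>] conjI eta ballI impI)
    fix x' assume x': "x' \<in> Cinf U" and nb: "x' \<in> whitney_nbhd U x k (\<lambda>_. \<eta>)"
    define d where "d = (\<lambda>v. x' v - x v)"
    have sx: "smooth_on U x" "smooth_on U x'" using x x' by (simp_all add: Cinf_smooth)
    have sd: "smooth_on U d" unfolding d_def using smooth_on_diff[OF U sx(2) sx(1)] .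
    have sdV: "smooth_on V d" using smooth_on_subset[OF sd VU] .
    have dbeta: "norm (Dmulti (a,b,c) d u0) < \<eta>" if "a+b+c \<le> k" for a b c
    proof -
      have "Dmulti (a,b,c) d u0 = Dmulti (a,b,c) x' u0 - Dmulti (a,b,c) x u0"
        unfolding Dmulti_pd d_def using pd_diff[OF U sx(2) sx(1) mlist_Basis u0(1)] .
      then show ?thesis using nb u0(1) that unfolding whitney_nbhd_def by auto
    qed
    have comp: "\<bar>(jet idx (Gf j x' \<xi> u0 t0 0) u0 - jet idx (Gf j x \<xi> u0 t0 0) u0) $ m\<bar> \<le> \<eta> * (Kp + C m)" for m
    proof -
      obtain a b c i where im: "idx m = ((a,b,c),i)" by (metis prod.exhaust)
      have k: "a+b+c \<le> k" using idx_k[OF idx im] by simp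
      let ?G' = "Gf j x' \<xi> u0 t0 0" and ?G = "Gf j x \<xi> u0 t0 0"
      define f where "f = (\<lambda>v. (d v - d u0) $ j)"
      have sf: "smooth_on V f" unfolding f_def
        using smooth_comp[OF oV smooth_on_diff[OF oV sdV smooth_on_const]] .
      have sG: "smooth_on V ?G'" "smooth_on V ?G"
        using smooth_Gf[OF U xi sx(2)] smooth_Gf[OF U xi sx(1)] V_def by simp_all
      have spd: "smooth_on V (\<lambda>v. forget_coord j (d v))"
        using smooth_on_linear[OF oV bounded_linear_forget sdV] .
      have sfr: "smooth_on V (\<lambda>v. f v *\<^sub>R rr j \<xi> v)" using smooth_on_scaleR[OF oV sf srr] .
      have "Dmulti (a,b,c) ?G' u0 - Dmulti (a,b,c) ?G u0 = Dmulti (a,b,c) (\<lambda>v. ?G' v - ?G v) u0"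
        unfolding Dmulti_pd using pd_diff[OF oV sG mlist_Basis u0V] by simp
      also have "(\<lambda>v. ?G' v - ?G v) = (\<lambda>v. forget_coord j (d v) - f v *\<^sub>R rr j \<xi> v)"
        by (rule ext) (simp add: Gf_diff d_def f_def)
      also have "Dmulti (a,b,c) (\<lambda>v. forget_coord j (d v) - f v *\<^sub>R rr j \<xi> v) u0 =
         forget_coord j (Dmulti (a,b,c) d u0) - Dmulti (a,b,c) (\<lambda>v. f v *\<^sub>R rr j \<xi> v) u0"
        unfolding Dmulti_pd using pd_diff[OF oV spd sfr mlist_Basis u0V]
          pd_linear[OF oV sdV bounded_linear_forget mlist_Basis u0V] by simp
      finally have eq: "Dmulti (a,b,c) ?G' u0 - Dmulti (a,b,c) ?G u0 =
         forget_coord j (Dmulti (a,b,c) d u0) - Dmulti (a,b,c) (\<lambda>v. f v *\<^sub>R rr j \<xi> v) u0" .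
      have n1: "norm (forget_coord j (Dmulti (a,b,c) d u0)) \<le> \<eta> * Kp"
      proof -
        have "norm (forget_coord j (Dmulti (a,b,c) d u0)) \<le> norm (Dmulti (a,b,c) d u0) * Kp" using Kp(2) .
        also have "\<dots> \<le> \<eta> * Kp" using dbeta[OF k] Kp(1) by simp
        finally show ?thesis .
      qed
      have fb: "\<bar>Dmulti (a',b',c') f u0\<bar> \<le> \<eta>" if "a' \<le> a" "b' \<le> b" "c' \<le> c" for a' b' c'
        unfolding f_def using Dmulti_f_bound[OF oV sdV u0V dbeta] that k by simp
      have n2: "norm (Dmulti (a,b,c) (\<lambda>v. f v *\<^sub>R rr j \<xi> v) u0) \<le> \<eta> * C m"
        using leibniz_bound[OF oV sf srr u0V fb] im by (simp add: C_def)
      have "norm (Dmulti (a,b,c) ?G' u0 - Dmulti (a,b,c) ?G u0) \<le> \<eta> * (Kp + C m)"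
        unfolding eq using norm_triangle_le_diff[of "forget_coord j (Dmulti (a,b,c) d u0)"] n1 n2
        by (smt (verit, ccfv_SIG) distrib_left norm_triangle_ineq4)
      moreover have "\<bar>(jet idx ?G' u0 - jet idx ?G u0) $ m\<bar> =
          \<bar>(Dmulti (a,b,c) ?G' u0 - Dmulti (a,b,c) ?G u0) $ i\<bar> / (fact a * fact b * fact c)"
        by (simp add: jet_nth[where idx=idx, OF im] diff_divide_distrib[symmetric] abs_divide abs_mult)
      moreover have "\<bar>(Dmulti (a,b,c) ?G' u0 - Dmulti (a,b,c) ?G u0) $ i\<bar> / (fact a * fact b * fact c)
          \<le> \<bar>(Dmulti (a,b,c) ?G' u0 - Dmulti (a,b,c) ?G u0) $ i\<bar>"
      proof -
        have f1: "(1::real) \<le> fact a" "(1::real) \<le> fact b" "(1::real) \<le> fact c" by (simp_all add: fact_ge_1)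
        have "(1::real) \<le> fact a * fact b" using mult_mono[OF f1(1) f1(2)] by simp
        then have "(1::real) \<le> fact a * fact b * fact c" using mult_mono[OF _ f1(3)] by fastforce
        from divide_left_mono[OF this abs_ge_zero, of "(Dmulti (a,b,c) ?G' u0 - Dmulti (a,b,c) ?G u0) $ i"] this
        show ?thesis by simp
      qed
      moreover have "\<bar>(Dmulti (a,b,c) ?G' u0 - Dmulti (a,b,c) ?G u0) $ i\<bar> \<le> norm (Dmulti (a,b,c) ?G' u0 - Dmulti (a,b,c) ?G u0)"
        by (rule component_le_norm_cart)
      ultimately show ?thesis by linarith
    qed
    have "norm (jet idx (Gf j x' \<xi> u0 t0 0) u0 - jet idx (Gf j x \<xi> u0 t0 0) u0)
        \<le> (\<Sum>m\<in>UNIV. \<bar>(jet idx (Gf j x' \<xi> u0 t0 0) u0 - jet idx (Gf j x \<xi> u0 t0 0) u0) $ m\<bar>)"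
      by (rule norm_le_l1_cart)
    also have "\<dots> \<le> (\<Sum>m\<in>UNIV. \<eta> * (Kp + C m))" by (rule sum_mono) (rule comp)
    also have "\<dots> = \<eta> * S" by (simp add: S_def sum_distrib_left)
    also have "\<dots> < \<epsilon>"
    proof -
      have "\<eta> * S < \<eta> * (S + 1)" using eta by simp
      also have "\<eta> * (S + 1) = \<epsilon>" using S0 by (simp add: \<eta>_def)
      finally show ?thesis .
    qed
    finally show "norm (jet idx (Gf j x' \<xi> u0 t0 0) u0 - jet idx (Gf j x \<xi> u0 t0 0) u0) < \<epsilon>" .
  qed
qed


definition wpred :: "(real^3) set \<Rightarrow> (real^3 \<Rightarrow> real^4) set \<Rightarrow> bool" where
  "wpred U = (\<lambda>S. S \<subseteq> Cinf U \<and>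
     (\<forall>f\<in>S. \<exists>k \<delta>. continuous_on U \<delta> \<and> (\<forall>u\<in>U. 0 < \<delta> u) \<and> Cinf U \<inter> whitney_nbhd U f k \<delta> \<subseteq> S))"

lemma istopology_wpred: "istopology (wpred U)"
  unfolding istopology_def
proof safe
  fix S T assume S: "wpred U S" and T: "wpred U T"
  show "wpred U (S \<inter> T)"
    unfolding wpred_def
  proof safe
    fix x assume "x \<in> S" then show "x \<in> Cinf U" using S by (auto simp: wpred_def)
  next
    fix f assume f: "f \<in> S" "f \<in> T"
    obtain k1 d1 where 1: "continuous_on U d1" "\<forall>u\<in>U. 0 < d1 u" "Cinf U \<inter> whitney_nbhd U f k1 d1 \<subseteq> S"
      using S f unfolding wpred_def by blast
    obtain k2 d2 where 2: "continuous_on U d2" "\<forall>u\<in>U. 0 < d2 u" "Cinf U \<inter> whitney_nbhd U f k2 d2 \<subseteq> T"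
      using T f unfolding wpred_def by blast
    have sub: "whitney_nbhd U f (max k1 k2) (\<lambda>u. min (d1 u) (d2 u)) \<subseteq> whitney_nbhd U f k1 d1 \<inter> whitney_nbhd U f k2 d2"
      unfolding whitney_nbhd_def by force
    show "\<exists>k \<delta>. continuous_on U \<delta> \<and> (\<forall>u\<in>U. 0 < \<delta> u) \<and> Cinf U \<inter> whitney_nbhd U f k \<delta> \<subseteq> S \<inter> T"
      apply (rule exI[of _ "max k1 k2"], rule exI[of _ "\<lambda>u. min (d1 u) (d2 u)"])
      using 1 2 sub by (auto intro: continuous_on_min)
  qed
next
  fix K assume K: "\<forall>S\<in>K. wpred U S"
  show "wpred U (\<Union>K)"
    unfolding wpred_def
  proof safe
    fix x X assume "x \<in> X" "X \<in> K" then show "x \<in> Cinf U" using K by (auto simp: wpred_def)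
  next
    fix f X assume "f \<in> X" "X \<in> K"
    then obtain k \<delta> where "continuous_on U \<delta>" "\<forall>u\<in>U. 0 < \<delta> u" "Cinf U \<inter> whitney_nbhd U f k \<delta> \<subseteq> X"
      using K unfolding wpred_def by blast
    then show "\<exists>k \<delta>. continuous_on U \<delta> \<and> (\<forall>u\<in>U. 0 < \<delta> u) \<and> Cinf U \<inter> whitney_nbhd U f k \<delta> \<subseteq> \<Union>K"
      using \<open>X \<in> K\<close> by blast
  qed
qed

lemma whitney_eq: "whitney_Cinf U = topology (wpred U)"
  unfolding whitney_Cinf_def wpred_def by simp

lemma openin_whitney: "openin (whitney_Cinf U) S \<longleftrightarrow> wpred U S"
  unfolding whitney_eq using istopology_wpred by simp

lemma topspace_whitney: "topspace (whitney_Cinf U) = Cinf U"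
proof -
  have "wpred U (Cinf U)"
    unfolding wpred_def
    by (auto intro!: exI[of _ "0::nat"] exI[of _ "\<lambda>_. 1::real"] continuous_on_const)
  then show ?thesis unfolding topspace_def openin_whitney by (auto simp: wpred_def)
qed

lemma submanifold_locally_closed:
  assumes "submanifold W" "w \<in> W"
  obtains V where "open V" "w \<in> V" "\<And>y. y \<in> V \<Longrightarrow> y \<in> closure W \<Longrightarrow> y \<in> W"
proof -
  have "\<exists>V (\<psi>::'a\<Rightarrow>'a) L. open V \<and> w \<in> V \<and> subspace L \<and>
      smooth_on V \<psi> \<and> inj_on \<psi> V \<and> open (\<psi> ` V) \<and> smooth_on (\<psi> ` V) (inv_into V \<psi>) \<and>
      \<psi> ` (W \<inter> V) = L \<inter> \<psi> ` V"
    using assms unfolding submanifold_def by (rule bspec)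
  then obtain V and \<psi> :: "'a \<Rightarrow> 'a" and L where ch: "open V" "w \<in> V" "subspace L" "smooth_on V \<psi>" "inj_on \<psi> V"
      "\<psi> ` (W \<inter> V) = L \<inter> \<psi> ` V"
    by blast
  have cont: "continuous_on V \<psi>" using smooth_on_continuous[OF ch(4)] .
  have "y \<in> W" if y: "y \<in> V" "y \<in> closure W" for y
  proof -
    have "y \<in> V \<inter> closure W" using y by (rule IntI)
    then have "y \<in> closure (V \<inter> W)" using open_Int_closure_subset[OF ch(1), of W] by (rule subsetD[rotated])
    then have "\<exists>s. (\<forall>n. s n \<in> V \<inter> W) \<and> s \<longlonglongrightarrow> y" by (simp only: closure_sequential)
    then obtain s where s: "\<And>n. s n \<in> V \<inter> W" "s \<longlonglongrightarrow> y" by blast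
    have "isCont \<psi> y" using continuous_on_eq_continuous_at[OF ch(1)] cont y(1) by blast
    then have "(\<lambda>n. \<psi> (s n)) \<longlonglongrightarrow> \<psi> y" by (rule isCont_tendsto_compose[OF _ s(2)])
    moreover have "\<psi> (s n) \<in> L" for n
    proof -
      have "\<psi> (s n) \<in> \<psi> ` (W \<inter> V)" using s(1)[of n] by (intro imageI) blast
      then show ?thesis unfolding ch(6) by (rule IntD1)
    qed
    ultimately have "\<psi> y \<in> L" using closed_sequentially[OF closed_subspace[OF ch(3)], of "\<lambda>n. \<psi> (s n)"] by blast
    then have "\<psi> y \<in> L \<inter> \<psi> ` V" using y(1) by (intro IntI imageI)
    then have "\<psi> y \<in> \<psi> ` (W \<inter> V)" unfolding ch(6) .
    then obtain z where z: "\<psi> y = \<psi> z" "z \<in> W \<inter> V" by (rule imageE)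
    have "z = y" using inj_onD[OF ch(5) z(1)[symmetric] IntD2[OF z(2)] y(1)] .
    then show "y \<in> W" using z(2) by simp
  qed
  then show ?thesis using that ch(1,2) by blast
qed

lemma nowhere_dense_boundary:
  assumes "submanifold W"
  shows "interior (closure (W - interior W)) = {}"
proof (rule ccontr)
  assume "interior (closure (W - interior W)) \<noteq> {}"
  define Ob where "Ob = interior (closure (W - interior W))"
  have O: "open Ob" "Ob \<noteq> {}" "Ob \<subseteq> closure (W - interior W)"
    using \<open>interior (closure (W - interior W)) \<noteq> {}\<close> interior_subset[of "closure (W - interior W)"]
    unfolding Ob_def by auto
  have "Ob \<inter> (W - interior W) \<noteq> {}"
    using O open_Int_closure_eq_empty[OF O(1), of "W - interior W"] by blast
  then obtain w where w: "w \<in> Ob" "w \<in> W" "w \<notin> interior W" by blast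
  obtain V where V: "open V" "w \<in> V" "\<And>y. y \<in> V \<Longrightarrow> y \<in> closure W \<Longrightarrow> y \<in> W"
    using submanifold_locally_closed[OF assms w(2)] by blast
  have "Ob \<inter> V \<subseteq> W"
  proof
    fix y assume "y \<in> Ob \<inter> V"
    moreover have "closure (W - interior W) \<subseteq> closure W" by (rule closure_mono) blast
    ultimately show "y \<in> W" using V(3) O(3) by blast
  qed
  then have "Ob \<inter> V \<subseteq> interior W" using O(1) V(1) interior_maximal by blast
  then show False using w V(2) by blast
qed

lemma tangent_interior:
  assumes "w \<in> interior W"
  shows "tangent_space W w = UNIV"
proof safe
  fix v :: 'a
  obtain e where e: "e > 0" "ball w e \<subseteq> interior W" using assms open_interior open_contains_ball by blast
  then have e2: "ball w e \<subseteq> W" using interior_subset by blast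
  define e' where "e' = e / (norm v + 1)"
  have np: "norm v + 1 > 0" using norm_ge_zero[of v] by linarith
  then have e': "e' > 0" using e(1) by (simp add: e'_def)
  have "w + t *\<^sub>R v \<in> W" if "\<bar>t\<bar> < e'" for t
  proof -
    have "norm (t *\<^sub>R v) = \<bar>t\<bar> * norm v" by simp
    also have "\<dots> \<le> \<bar>t\<bar> * (norm v + 1)" by (simp add: mult_left_mono)
    also have "\<dots> < e' * (norm v + 1)" by (rule mult_strict_right_mono[OF that np])
    also have "\<dots> = e" using np by (simp add: e'_def)
    finally show ?thesis using e2 by (auto simp: dist_norm)
  qed
  moreover have "((\<lambda>t. w + t *\<^sub>R v) has_vector_derivative v) (at 0)"
    by (auto intro!: derivative_eq_intros)
  ultimately show "v \<in> tangent_space W w"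
    unfolding tangent_space_def using e' by (intro CollectI exI[of _ "\<lambda>t. w + t *\<^sub>R v"] exI[of _ e']) auto
qed simp

lemma transversal_interior:
  assumes "J differentiable (at p)" "J p \<in> W \<longrightarrow> J p \<in> interior W"
  shows "transversal_at J W p"
  unfolding transversal_at_def
proof
  assume "J p \<in> W"
  then have t: "tangent_space W (J p) = UNIV" using assms(2) tangent_interior by blast
  obtain J' where J': "(J has_derivative J') (at p)" using assms(1) unfolding differentiable_def by blast
  have "0 \<in> range J'" using linear_0[OF has_derivative_linear[OF J']] by (metis rangeI)
  then have "x \<in> {y + z |y z. y \<in> range J' \<and> z \<in> tangent_space W (J p)}" for x
    unfolding t by (intro CollectI exI[of _ 0] exI[of _ x]) simp
  then have "{y + z |y z. y \<in> range J' \<and> z \<in> tangent_space W (J p)} = UNIV" by blast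
  then show "\<exists>J'. (J has_derivative J') (at p) \<and> {y + z |y z. y \<in> range J' \<and> z \<in> tangent_space W (J p)} = UNIV"
    using J' by blast
qed


lemma chi_sum_axis: "(\<chi> m. g m) = (\<Sum>m\<in>UNIV. g m *\<^sub>R axis m (1::real))"
  by (simp add: vec_eq_iff axis_def if_distrib cong: if_cong)

lemma Gf_s: "Gf j x \<xi> u0 t0 s v = Gf j x \<xi> u0 t0 0 v + s *\<^sub>R forget_coord j (\<xi> v)"
  by (simp add: Gf_eq)

lemma J_differentiable:
  fixes idx :: "'j::finite \<Rightarrow> (nat \<times> nat \<times> nat) \<times> 3"
  assumes U: "open U" and xi: "smooth_on U \<xi>" and u0: "u0 \<in> U" "\<xi> u0 $ j \<noteq> 0"
    and x: "x \<in> Cinf U"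
  shows "(jet1 idx (\<lambda>p. forget_coord j (Ftilde j x \<xi> u0 t0 p))) differentiable (at (u0, 0))"
proof -
  define V where "V = Vj U \<xi> j"
  have oV: "open V" using open_Vj[OF U xi] V_def by simp
  have u0V: "u0 \<in> V" using u0 by (simp add: V_def Vj_def)
  have VU: "V \<subseteq> U" using Vj_sub V_def by simp
  have sx: "smooth_on U x" using x by (simp add: Cinf_smooth)
  have sG: "smooth_on V (Gf j x \<xi> u0 t0 0)" using smooth_Gf[OF U xi sx] V_def by simp
  have sP: "smooth_on V (\<lambda>v. forget_coord j (\<xi> v))"
    using smooth_on_linear[OF oV bounded_linear_forget smooth_on_subset[OF xi VU]] .
  define A where "A m u = (case idx m of ((a,b,c),i) \<Rightarrow> Dmulti (a,b,c) (Gf j x \<xi> u0 t0 0) u $ i / (fact a * fact b * fact c))" for m u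
  define B where "B m u = (case idx m of ((a,b,c),i) \<Rightarrow> Dmulti (a,b,c) (\<lambda>v. forget_coord j (\<xi> v)) u $ i / (fact a * fact b * fact c))" for m u
  define J2 where "J2 p = (\<Sum>m\<in>UNIV. (A m (fst p) + snd p * B m (fst p)) *\<^sub>R axis m (1::real))" for p :: "(real^3) \<times> real"
  have dA: "A m differentiable (at u0)" "B m differentiable (at u0)" for m
  proof -
    obtain a b c i where im: "idx m = ((a,b,c),i)" by (metis prod.exhaust)
    have s1: "smooth_on V (\<lambda>u. Dmulti (a,b,c) (Gf j x \<xi> u0 t0 0) u $ i * inverse (fact a * fact b * fact c))"
      unfolding Dmulti_pd
      by (intro smooth_on_mult[OF oV] smooth_comp[OF oV] smooth_on_pd[OF sG mlist_Basis] smooth_on_const)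
    have s2: "smooth_on V (\<lambda>u. Dmulti (a,b,c) (\<lambda>v. forget_coord j (\<xi> v)) u $ i * inverse (fact a * fact b * fact c))"
      unfolding Dmulti_pd
      by (intro smooth_on_mult[OF oV] smooth_comp[OF oV] smooth_on_pd[OF sP mlist_Basis] smooth_on_const)
    have "A m = (\<lambda>u. Dmulti (a,b,c) (Gf j x \<xi> u0 t0 0) u $ i * inverse (fact a * fact b * fact c))"
      by (simp add: A_def im divide_inverse fun_eq_iff)
    then show "A m differentiable (at u0)" using smooth_on_differentiable[OF s1 u0V] by (simp only:)
    have "B m = (\<lambda>u. Dmulti (a,b,c) (\<lambda>v. forget_coord j (\<xi> v)) u $ i * inverse (fact a * fact b * fact c))"
      by (simp add: B_def im divide_inverse fun_eq_iff)
    then show "B m differentiable (at u0)" using smooth_on_differentiable[OF s2 u0V] by (simp only:)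
  qed
  have dJ2: "J2 differentiable (at (u0, 0))"
  proof -
    have fstd: "fst differentiable (at (u0, 0::real))" using bounded_linear_fst bounded_linear_imp_differentiable by blast
    have sndd: "snd differentiable (at (u0, 0::real))" using bounded_linear_snd bounded_linear_imp_differentiable by blast
    have "(\<lambda>p. A m (fst p)) differentiable (at (u0, 0::real))" for m
      using differentiable_chain_at[OF fstd, of "A m"] dA(1) by (simp add: o_def)
    moreover have "(\<lambda>p. B m (fst p)) differentiable (at (u0, 0::real))" for m
      using differentiable_chain_at[OF fstd, of "B m"] dA(2) by (simp add: o_def)
    ultimately have "(\<lambda>p. (A m (fst p) + snd p * B m (fst p)) *\<^sub>R axis m (1::real)) differentiable (at (u0, 0))" for m
      using sndd by (intro differentiable_scaleR differentiable_add differentiable_mult differentiable_const) auto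
    then show ?thesis unfolding J2_def by (intro differentiable_sum) auto
  qed
  have eq: "jet1 idx (\<lambda>p. forget_coord j (Ftilde j x \<xi> u0 t0 p)) p = J2 p" if p: "p \<in> V \<times> UNIV" for p
  proof -
    obtain u s where us: "p = (u, s)" by (cases p)
    have uV: "u \<in> V" using p us by simp
    have "jet1 idx (\<lambda>p. forget_coord j (Ftilde j x \<xi> u0 t0 p)) p = jet idx (Gf j x \<xi> u0 t0 s) u"
      by (simp add: us jet1_def Gf_def)
    also have "\<dots> = (\<chi> m. A m u + s * B m u)"
    proof (subst vec_eq_iff, rule allI)
      fix m
      obtain a b c i where im: "idx m = ((a,b,c),i)" by (metis prod.exhaust)
      have "Dmulti (a,b,c) (Gf j x \<xi> u0 t0 s) u = Dmulti (a,b,c) (\<lambda>v. Gf j x \<xi> u0 t0 0 v + s *\<^sub>R forget_coord j (\<xi> v)) u"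
        using ext[of "Gf j x \<xi> u0 t0 s" "\<lambda>v. Gf j x \<xi> u0 t0 0 v + s *\<^sub>R forget_coord j (\<xi> v)", OF Gf_s]
        by (simp only:)
      also have "\<dots> = Dmulti (a,b,c) (Gf j x \<xi> u0 t0 0) u + s *\<^sub>R Dmulti (a,b,c) (\<lambda>v. forget_coord j (\<xi> v)) u"
        unfolding Dmulti_pd
        using pd_add[OF oV sG smooth_on_scaleR[OF oV smooth_on_const sP] mlist_Basis uV]
          pd_scaleR[OF oV sP mlist_Basis uV] by simp
      finally show "jet idx (Gf j x \<xi> u0 t0 s) u $ m = (\<chi> m. A m u + s * B m u) $ m"
        by (simp add: jet_nth[where idx=idx, OF im] A_def B_def im add_divide_distrib)
    qed
    also have "\<dots> = J2 p" unfolding chi_sum_axis J2_def us by simp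
    finally show ?thesis .
  qed
  have "open (V \<times> (UNIV::real set))" using oV by (simp add: open_Times)
  moreover have "(u0, 0) \<in> V \<times> (UNIV::real set)" using u0V by simp
  ultimately show ?thesis using differentiable_cong_open[OF _ _ eq[symmetric] dJ2] by blast
qed


fun ck1 :: "nat \<Rightarrow> (real \<Rightarrow> real) \<Rightarrow> bool" where
  "ck1 0 f = continuous_on UNIV f"
| "ck1 (Suc k) f = ((\<forall>t. f differentiable (at t)) \<and> ck1 k (deriv f))"

definition smooth1 :: "(real \<Rightarrow> real) \<Rightarrow> bool" where
  "smooth1 f \<longleftrightarrow> (\<forall>k. ck1 k f)"

lemma smooth1_family:
  assumes "\<And>n t. (F n has_real_derivative F (Suc n) t) (at t)"
  shows "smooth1 (F n)"
proof -
  have "ck1 k (F n)" for k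
  proof (induction k arbitrary: n)
    case 0
    have "isCont (F n) t" for t using DERIV_isCont[OF assms] .
    then show ?case by (simp add: continuous_at_imp_continuous_on)
  next
    case (Suc k)
    have d: "deriv (F n) = F (Suc n)" using DERIV_imp_deriv[OF assms] by blast
    have "F n differentiable (at t)" for t using assms real_differentiable_def by blast
    then show ?case using Suc d by simp
  qed
  then show ?thesis by (simp add: smooth1_def)
qed

lemma smooth1_deriv: "smooth1 f \<Longrightarrow> smooth1 (deriv f)"
  unfolding smooth1_def by (metis ck1.simps(2))

lemma smooth1_differentiable: "smooth1 f \<Longrightarrow> f differentiable (at t)"
  unfolding smooth1_def by (metis ck1.simps(2))

lemma smooth1_cont: "smooth1 f \<Longrightarrow> continuous_on UNIV f"
  unfolding smooth1_def by (metis ck1.simps(1))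

lemma smooth1_has_deriv: "smooth1 f \<Longrightarrow> (f has_real_derivative deriv f t) (at t)"
  using smooth1_differentiable DERIV_deriv_iff_real_differentiable by blast

lemma Ck_on_compose1:
  fixes g :: "'a::euclidean_space \<Rightarrow> real"
  assumes "open V" "Ck_on k V g" "smooth1 \<Phi>"
  shows "Ck_on k V (\<lambda>v. \<Phi> (g v))"
  using assms(2,3)
proof (induction k arbitrary: \<Phi>)
  case 0
  have "continuous_on (g ` V) \<Phi>" using smooth1_cont[OF 0(2)] continuous_on_subset by blast
  then show ?case using 0(1) continuous_on_compose2 by fastforce
next
  case (Suc k)
  show ?case unfolding Ck_on.simps
  proof safe
    fix u assume "u \<in> V"
    then have "g differentiable at u" using Suc.prems by simp
    moreover have "\<Phi> differentiable at (g u)" using smooth1_differentiable[OF Suc.prems(2)] .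
    ultimately show "(\<lambda>v. \<Phi> (g v)) differentiable at u"
      using differentiable_chain_at[of g u \<Phi>] by (simp add: o_def)
  next
    fix b :: 'a assume b: "b \<in> Basis"
    have g1: "Ck_on k V g" using Suc.prems(1) Ck_on_Suc_mono by blast
    have a: "Ck_on k V (pdiff b g)" using Suc.prems b by simp
    have "Ck_on k V (\<lambda>v. deriv \<Phi> (g v))" using Suc.IH[OF g1 smooth1_deriv[OF Suc.prems(2)]] .
    then have "Ck_on k V (\<lambda>v. pdiff b g v * deriv \<Phi> (g v))" using Ck_on_mult[OF assms(1) a] by blast
    moreover have "pdiff b g v * deriv \<Phi> (g v) = pdiff b (\<lambda>v. \<Phi> (g v)) v" if v: "v \<in> V" for v
    proof -
      have "g differentiable at v" using Suc.prems v by simp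
      then obtain G where G: "(g has_derivative G) (at v)" unfolding differentiable_def by auto
      have P0: "(\<Phi> has_derivative (*) (deriv \<Phi> (g v))) (at (g v))"
        using smooth1_has_deriv[OF Suc.prems(2)] unfolding has_field_derivative_def .
      have eqf: "(*) (deriv \<Phi> (g v)) = (\<lambda>x. x * deriv \<Phi> (g v))" by (auto simp: fun_eq_iff)
      have P: "(\<Phi> has_derivative (\<lambda>x. x * deriv \<Phi> (g v))) (at (g v))"
        using P0 unfolding eqf .
      have "((\<lambda>v. \<Phi> (g v)) has_derivative (\<lambda>h. G h * deriv \<Phi> (g v))) (at v)"
        using has_derivative_compose[OF G P] .
      from pdiff_at[OF this, of b] pdiff_at[OF G, of b] show ?thesis by simp
    qed
    ultimately show "Ck_on k V (pdiff b (\<lambda>v. \<Phi> (g v)))" using Ck_on_cong[OF _ assms(1)] by blast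
  qed
qed

lemma smooth_on_compose1:
  fixes g :: "'a::euclidean_space \<Rightarrow> real"
  shows "open V \<Longrightarrow> smooth_on V g \<Longrightarrow> smooth1 \<Phi> \<Longrightarrow> smooth_on V (\<lambda>v. \<Phi> (g v))"
  unfolding smooth_on_def using Ck_on_compose1 by blast

lemma poly_exp_tendsto: "((\<lambda>y. poly p y * exp (- y)) \<longlongrightarrow> (0::real)) at_top"
proof -
  have "((\<lambda>y. \<Sum>i\<le>degree p. coeff p i * (y ^ i / exp y)) \<longlongrightarrow> 0) at_top"
    by (intro tendsto_null_sum tendsto_mult_right_zero tendsto_power_div_exp_0)
  moreover have "poly p y * exp (- y) = (\<Sum>i\<le>degree p. coeff p i * (y ^ i / exp y))" for y
    by (simp add: poly_altdef sum_distrib_right exp_minus divide_inverse mult.assoc)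
  ultimately show ?thesis by simp
qed

fun Qp :: "nat \<Rightarrow> real poly" where
  "Qp 0 = 1"
| "Qp (Suc n) = [:0, 0, 1:] * (Qp n - pderiv (Qp n))"

definition psi :: "nat \<Rightarrow> real \<Rightarrow> real" where
  "psi n t = (if t > 0 then poly (Qp n) (inverse t) * exp (- inverse t) else 0)"

lemma psi_right_lim: "((\<lambda>t. poly p (inverse t) * exp (- inverse t)) \<longlongrightarrow> (0::real)) (at_right 0)"
  using filterlim_compose[OF poly_exp_tendsto filterlim_inverse_at_top_right] by (simp add: o_def)

lemma psi_deriv_pos:
  assumes "t > 0"
  shows "(psi n has_real_derivative psi (Suc n) t) (at t)"
proof -
  have "((\<lambda>t. poly (Qp n) (inverse t) * exp (- inverse t)) has_real_derivative
      (poly (pderiv (Qp n)) (inverse t) * (- inverse (t^2))) * exp (- inverse t) +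
       poly (Qp n) (inverse t) * (exp (- inverse t) * inverse (t^2))) (at t)"
    using assms
    by (auto intro!: derivative_eq_intros DERIV_chain2[OF poly_DERIV] simp: power2_eq_square field_simps)
  moreover have "(poly (pderiv (Qp n)) (inverse t) * (- inverse (t^2))) * exp (- inverse t) +
       poly (Qp n) (inverse t) * (exp (- inverse t) * inverse (t^2)) = psi (Suc n) t"
    using assms by (simp add: psi_def power2_eq_square field_simps)
  ultimately show ?thesis
    using has_field_derivative_transform_within_open[of _ _ t "{0<..}" "psi n"] assms
    by (simp add: psi_def)
qed

lemma psi_deriv_neg:
  assumes "t < 0"
  shows "(psi n has_real_derivative psi (Suc n) t) (at t)"
proof -
  have "(psi n has_real_derivative 0) (at t)"
    by (rule has_field_derivative_transform_within_open[where f="\<lambda>_. 0" and S="{..<0}"]) (auto simp: assms psi_def)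
  then show ?thesis using assms by (simp add: psi_def)
qed

lemma psi_deriv_0: "(psi n has_real_derivative psi (Suc n) 0) (at 0)"
proof -
  have "((\<lambda>h. (psi n (0 + h) - psi n 0) / h) \<longlongrightarrow> 0) (at 0)"
  proof (rule filterlim_split_at)
    show "((\<lambda>h. (psi n (0 + h) - psi n 0) / h) \<longlongrightarrow> 0) (at_left 0)"
    proof (rule Lim_transform_eventually[of "\<lambda>_. 0"])
      show "\<forall>\<^sub>F h in at_left 0. 0 = (psi n (0 + h) - psi n 0) / h"
        unfolding eventually_at_left_field by (auto simp: psi_def intro: exI[of _ "-1"])
    qed simp
    have "((\<lambda>t. poly (pCons 0 (Qp n)) (inverse t) * exp (- inverse t)) \<longlongrightarrow> (0::real)) (at_right 0)"
      by (rule psi_right_lim)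
    then show "((\<lambda>h. (psi n (0 + h) - psi n 0) / h) \<longlongrightarrow> 0) (at_right 0)"
    proof (rule Lim_transform_eventually)
      show "\<forall>\<^sub>F h in at_right 0. poly (pCons 0 (Qp n)) (inverse h) * exp (- inverse h) = (psi n (0 + h) - psi n 0) / h"
        unfolding eventually_at_right_field
        by (auto simp: psi_def divide_inverse intro!: exI[of _ 1])
    qed
  qed
  then show ?thesis unfolding DERIV_def by (simp add: psi_def)
qed

lemma psi_deriv: "(psi n has_real_derivative psi (Suc n) t) (at t)"
  using psi_deriv_pos psi_deriv_neg psi_deriv_0 by (metis linorder_neqE_linordered_idom)

lemma smooth1_psi: "smooth1 (psi 0)"
  using smooth1_family[of psi, OF psi_deriv] .

lemma psi0: "psi 0 t = (if t > 0 then exp (- inverse t) else 0)"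
  by (simp add: psi_def)


definition sep3 :: "(nat \<Rightarrow> real \<Rightarrow> real) \<Rightarrow> (nat \<Rightarrow> real \<Rightarrow> real) \<Rightarrow> (nat \<Rightarrow> real \<Rightarrow> real) \<Rightarrow> nat \<times> nat \<times> nat \<Rightarrow> real^3 \<Rightarrow> real" where
  "sep3 F G H n u = (case n of (n1, n2, n3) \<Rightarrow> F n1 (u$1) * G n2 (u$2) * H n3 (u$3))"

definition fam :: "(nat \<Rightarrow> real \<Rightarrow> real) \<Rightarrow> bool" where
  "fam F \<longleftrightarrow> (\<forall>n t. (F n has_real_derivative F (Suc n) t) (at t))"

lemma has_derivative_coord:
  assumes "fam F"
  shows "((\<lambda>u::real^3. F n (u$i)) has_derivative (\<lambda>h. h$i * F (Suc n) (u$i))) (at u)"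
proof -
  have P0: "(F n has_derivative (*) (F (Suc n) (u$i))) (at (u$i))"
    using assms unfolding fam_def has_field_derivative_def by blast
  have eqf: "(*) (F (Suc n) (u$i)) = (\<lambda>x. x * F (Suc n) (u$i))" by (auto simp: fun_eq_iff)
  have "(F n has_derivative (\<lambda>x. x * F (Suc n) (u$i))) (at (u$i))"
    using P0 unfolding eqf .
  from has_derivative_compose[OF bounded_linear.has_derivative[OF bounded_linear_vec_nth has_derivative_ident] this]
  show ?thesis by simp
qed

lemma has_derivative_sep3:
  assumes "fam F" "fam G" "fam H"
  shows "(sep3 F G H (n1,n2,n3) has_derivative
     (\<lambda>h. h$1 * F (Suc n1) (u$1) * G n2 (u$2) * H n3 (u$3) + F n1 (u$1) * (h$2 * G (Suc n2) (u$2)) * H n3 (u$3)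
        + F n1 (u$1) * G n2 (u$2) * (h$3 * H (Suc n3) (u$3)))) (at u)"
proof -
  have "((\<lambda>u. F n1 (u$1) * G n2 (u$2) * H n3 (u$3)) has_derivative
     (\<lambda>h. F n1 (u$1) * G n2 (u$2) * (h$3 * H (Suc n3) (u$3)) +
          (F n1 (u$1) * (h$2 * G (Suc n2) (u$2)) + h$1 * F (Suc n1) (u$1) * G n2 (u$2)) * H n3 (u$3))) (at u)"
    using has_derivative_mult[OF has_derivative_mult[OF has_derivative_coord[OF assms(1), of n1 1 u]
          has_derivative_coord[OF assms(2), of n2 2 u]] has_derivative_coord[OF assms(3), of n3 3 u]]
    by simp
  then show ?thesis unfolding sep3_def by (simp add: algebra_simps)
qed

lemma pdiff_sep3:
  assumes "fam F" "fam G" "fam H"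
  shows "pdiff (axis 1 1) (sep3 F G H (n1,n2,n3)) = sep3 F G H (Suc n1,n2,n3)"
    "pdiff (axis 2 1) (sep3 F G H (n1,n2,n3)) = sep3 F G H (n1,Suc n2,n3)"
    "pdiff (axis 3 1) (sep3 F G H (n1,n2,n3)) = sep3 F G H (n1,n2,Suc n3)"
  using pdiff_at[OF has_derivative_sep3[OF assms]]
  by (auto simp: fun_eq_iff sep3_def axis_def)

lemma Dmulti_sep3:
  assumes "fam F" "fam G" "fam H"
  shows "Dmulti (a,b,c) (sep3 F G H (0,0,0)) = sep3 F G H (a,b,c)"
proof -
  have 3: "(pdiff (axis 3 1) ^^ c) (sep3 F G H (n1,n2,n3)) = sep3 F G H (n1,n2,n3 + c)" for n1 n2 n3
    by (induction c) (simp_all add: pdiff_sep3[OF assms])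
  have 2: "(pdiff (axis 2 1) ^^ b) (sep3 F G H (n1,n2,n3)) = sep3 F G H (n1,n2 + b,n3)" for n1 n2 n3
    by (induction b) (simp_all add: pdiff_sep3[OF assms])
  have 1: "(pdiff (axis 1 1) ^^ a) (sep3 F G H (n1,n2,n3)) = sep3 F G H (n1 + a,n2,n3)" for n1 n2 n3
    by (induction a) (simp_all add: pdiff_sep3[OF assms])
  show ?thesis unfolding Dmulti_def using 1 2 3 by simp
qed

lemma smooth_on_id: "smooth_on UNIV (\<lambda>u::'a::euclidean_space. u)"
proof -
  have "Ck_on k UNIV (\<lambda>u::'a. u)" for k
  proof (induction k)
    case 0 then show ?case by (simp add: continuous_on_id)
  next
    case (Suc k)
    have "pdiff b (\<lambda>u::'a. u) = (\<lambda>_. b)" for b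
      using pdiff_at[OF has_derivative_ident] by (auto simp: fun_eq_iff)
    then show ?case by (auto intro: Ck_on_const)
  qed
  then show ?thesis by (simp add: smooth_on_def)
qed

lemma smooth_coord: "smooth_on UNIV (\<lambda>u::real^3. u $ i)"
  using smooth_on_linear[OF open_UNIV bounded_linear_vec_nth smooth_on_id] .

lemma smooth_sep3:
  assumes "fam F" "fam G" "fam H"
  shows "smooth_on UNIV (sep3 F G H n)"
proof -
  obtain n1 n2 n3 where n: "n = (n1,n2,n3)" by (cases n) auto
  have s: "smooth1 (F n1)" "smooth1 (G n2)" "smooth1 (H n3)"
    using smooth1_family assms unfolding fam_def by blast+
  have "smooth_on UNIV (\<lambda>u::real^3. F n1 (u$1) * G n2 (u$2) * H n3 (u$3))"
    by (intro smooth_on_mult[OF open_UNIV] smooth_on_compose1[OF open_UNIV smooth_coord] s)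
  then show ?thesis unfolding n sep3_def by simp
qed

definition pw :: "nat \<Rightarrow> real \<Rightarrow> nat \<Rightarrow> real \<Rightarrow> real" where
  "pw a c n t = (if n \<le> a then fact a / fact (a - n) * (t - c) ^ (a - n) else 0)"

lemma fam_pw: "fam (pw a c)"
  unfolding fam_def
proof (intro allI)
  fix n t
  show "(pw a c n has_real_derivative pw a c (Suc n) t) (at t)"
  proof (cases "n < a")
    case True
    then obtain m where m: "a - n = Suc m" by (metis Suc_diff_Suc)
    have am: "a - Suc n = m" using m by simp
    have d0: "((\<lambda>t. (t - c) ^ Suc m) has_real_derivative real (Suc m) * (t - c) ^ m) (at t)"
    proof -
      have "((\<lambda>t. t - c) has_real_derivative 1) (at t)" by (rule derivative_eq_intros) (auto intro: derivative_eq_intros)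
      from DERIV_power[OF this, of "Suc m"] show ?thesis by simp
    qed
    have "((\<lambda>t. fact a / fact (a - n) * (t - c) ^ (a - n)) has_real_derivative
        fact a / fact (a - n) * (real (Suc m) * (t - c) ^ m)) (at t)"
      unfolding m by (rule DERIV_cmult[OF d0])
    moreover have "fact a / fact (a - n) * (real (Suc m) * (t - c) ^ m) = pw a c (Suc n) t"
    proof -
      have fs: "(fact (Suc m)::real) = real (Suc m) * fact m" by (rule fact_Suc)
      have p: "real (Suc m) \<noteq> 0" "(fact m :: real) \<noteq> 0" by simp_all
      have "fact a / fact (Suc m) * (real (Suc m) * (t - c) ^ m) = fact a / fact m * (t - c) ^ m"
        unfolding fs using p by (simp add: divide_simps)
      then show ?thesis using True unfolding pw_def am m by simp
    qed
    moreover have "pw a c n = (\<lambda>t. fact a / fact (a - n) * (t - c) ^ (a - n))"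
      using True by (simp add: pw_def fun_eq_iff)
    ultimately show ?thesis by simp
  next
    case False
    then have "pw a c n = (\<lambda>_. if n \<le> a then fact a else 0)" by (auto simp: pw_def fun_eq_iff)
    moreover have "pw a c (Suc n) t = 0" using False by (simp add: pw_def)
    ultimately show ?thesis by simp
  qed
qed

lemma pw_at: "pw a c n c = (if n = a then fact a else 0)"
  by (simp add: pw_def)

lemma pw_0: "pw a c 0 t = (t - c) ^ a"
  by (simp add: pw_def)

definition mono :: "real^3 \<Rightarrow> nat \<times> nat \<times> nat \<Rightarrow> real^3 \<Rightarrow> real" where
  "mono u0 \<alpha> = (case \<alpha> of (a,b,c) \<Rightarrow> sep3 (pw a (u0$1)) (pw b (u0$2)) (pw c (u0$3)) (0,0,0))"

lemma smooth_mono: "smooth_on UNIV (mono u0 \<alpha>)"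
  unfolding mono_def by (cases \<alpha>) (auto intro: smooth_sep3 fam_pw)

lemma Dmulti_mono:
  "Dmulti (a',b',c') (mono u0 (a,b,c)) u0 = (if (a',b',c') = (a,b,c) then fact a * fact b * fact c else 0)"
  unfolding mono_def using Dmulti_sep3[OF fam_pw fam_pw fam_pw]
  by (simp add: sep3_def pw_at)


definition qf :: "real^3 \<Rightarrow> real \<Rightarrow> real^3 \<Rightarrow> real" where
  "qf u0 \<rho> u = (\<Sum>i\<in>UNIV. ((u$i - u0$i) / \<rho>)^2)"

lemma qf_eq: "qf u0 \<rho> u = (norm (u - u0) / \<rho>)^2"
proof -
  have "(norm (u - u0))^2 = (\<Sum>i\<in>UNIV. ((u - u0)$i)^2)"
    unfolding norm_vec_def L2_set_def by (simp add: sum_nonneg)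
  then show ?thesis unfolding qf_def by (simp add: power_divide sum_divide_distrib)
qed

lemma smooth_qf: "smooth_on UNIV (qf u0 \<rho>)"
proof -
  have s1: "smooth_on UNIV (\<lambda>u::real^3. (u$i - u0$i) * inverse \<rho>)" for i
    by (intro smooth_on_mult[OF open_UNIV] smooth_on_diff[OF open_UNIV] smooth_coord smooth_on_const)
  have "smooth_on UNIV (\<lambda>u::real^3. ((u$i - u0$i) * inverse \<rho>) * ((u$i - u0$i) * inverse \<rho>))" for i
    using smooth_on_mult[OF open_UNIV s1 s1] .
  then have "smooth_on UNIV (\<lambda>u::real^3. \<Sum>i\<in>UNIV. ((u$i - u0$i) * inverse \<rho>) * ((u$i - u0$i) * inverse \<rho>))"
    by (intro smooth_on_sum[OF open_UNIV]) auto
  moreover have "(\<lambda>u::real^3. \<Sum>i\<in>UNIV. ((u$i - u0$i) * inverse \<rho>) * ((u$i - u0$i) * inverse \<rho>)) = qf u0 \<rho>"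
    by (simp add: fun_eq_iff qf_def power2_eq_square divide_inverse)
  ultimately show ?thesis by simp
qed

definition bump :: "real^3 \<Rightarrow> real \<Rightarrow> real^3 \<Rightarrow> real" where
  "bump u0 \<rho> u = psi 0 (2 - qf u0 \<rho> u) * inverse (psi 0 (2 - qf u0 \<rho> u) + psi 0 (qf u0 \<rho> u - 1))"

lemma psi0_nonneg: "psi 0 t \<ge> 0" by (simp add: psi0)

lemma denom_pos: "psi 0 (2 - q) + psi 0 (q - 1) > 0"
proof (cases "q < 2")
  case True then have "psi 0 (2 - q) > 0" by (simp add: psi0)
  then show ?thesis using psi0_nonneg[of "q - 1"] by linarith
next
  case False then have "psi 0 (q - 1) > 0" by (simp add: psi0)
  then show ?thesis using psi0_nonneg[of "2 - q"] by linarith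
qed

lemma smooth_bump: "smooth_on UNIV (bump u0 \<rho>)"
proof -
  have a: "smooth_on UNIV (\<lambda>u. psi 0 (2 - qf u0 \<rho> u))"
    using smooth_on_compose1[OF open_UNIV smooth_on_diff[OF open_UNIV smooth_on_const[of UNIV 2] smooth_qf] smooth1_psi] .
  have b: "smooth_on UNIV (\<lambda>u. psi 0 (qf u0 \<rho> u - 1))"
    using smooth_on_compose1[OF open_UNIV smooth_on_diff[OF open_UNIV smooth_qf smooth_on_const[of UNIV 1]] smooth1_psi] .
  have "smooth_on UNIV (\<lambda>u. inverse (psi 0 (2 - qf u0 \<rho> u) + psi 0 (qf u0 \<rho> u - 1)))"
  proof (rule smooth_on_inverse[OF open_UNIV smooth_on_add[OF open_UNIV a b]])
    fix v :: "real^3"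
    show "psi 0 (2 - qf u0 \<rho> v) + psi 0 (qf u0 \<rho> v - 1) \<noteq> 0"
      using denom_pos[of "qf u0 \<rho> v"] by linarith
  qed
  then show ?thesis unfolding bump_def[abs_def] using smooth_on_mult[OF open_UNIV a] by blast
qed

lemma bump_1: "qf u0 \<rho> u \<le> 1 \<Longrightarrow> bump u0 \<rho> u = 1"
  unfolding bump_def using denom_pos[of "qf u0 \<rho> u"] by (simp add: psi0)

lemma bump_0: "qf u0 \<rho> u \<ge> 2 \<Longrightarrow> bump u0 \<rho> u = 0"
  unfolding bump_def by (simp add: psi0)

lemma Dmulti_local_zero:
  assumes "open Ob" "\<And>v. v \<in> Ob \<Longrightarrow> f v = 0" "u \<in> Ob"
  shows "Dmulti \<beta> f u = 0"
proof -
  have "Dmulti \<beta> f u = pd (mlist \<beta>) (\<lambda>_. 0) u"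
    unfolding Dmulti_pd using pd_cong[OF assms(1), of f "\<lambda>_. 0"] assms(2,3) by blast
  also have "\<dots> = 0" by (cases "mlist \<beta> = []") (simp_all add: pd_const)
  finally show ?thesis .
qed

lemma Dmulti_local:
  assumes "open Ob" "\<And>v. v \<in> Ob \<Longrightarrow> f v = g v" "u \<in> Ob"
  shows "Dmulti \<beta> f u = Dmulti \<beta> g u"
  unfolding Dmulti_pd using pd_cong[OF assms] .


lemma perturb:
  fixes idx :: "'j::finite \<Rightarrow> (nat \<times> nat \<times> nat) \<times> 3"
  assumes U: "open U" and xi: "smooth_on U \<xi>" and u0: "u0 \<in> U" "\<xi> u0 $ j \<noteq> 0"
    and idx: "bij_betw idx UNIV (jet_index k)" and x: "x \<in> Cinf U"
    and d: "continuous_on U \<delta>" "\<forall>u\<in>U. 0 < \<delta> u"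
  shows "\<exists>\<epsilon>>0. \<forall>v. norm v < \<epsilon> \<longrightarrow> (\<exists>y\<in>Cinf U. y \<in> whitney_nbhd U x k' \<delta> \<and>
            jet idx (Gf j y \<xi> u0 t0 0) u0 = jet idx (Gf j x \<xi> u0 t0 0) u0 + v)"
proof -
  obtain r where r: "r > 0" "cball u0 r \<subseteq> U" using U u0(1) open_contains_cball by blast
  define \<rho> where "\<rho> = r / 2"
  have rho: "\<rho> > 0" using r(1) by (simp add: \<rho>_def)
  define C where "C = cball u0 r"
  have CU: "C \<subseteq> U" using r(2) C_def by simp
  have qC: "u \<in> C" if "qf u0 \<rho> u \<le> 2" for u
  proof (rule ccontr)
    assume "u \<notin> C"
    then have "norm (u - u0) > 2 * \<rho>" by (simp add: C_def \<rho>_def dist_norm norm_minus_commute)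
    then have "norm (u - u0) / \<rho> > 2" using rho by (simp add: field_simps)
    then have "(norm (u - u0) / \<rho>)^2 > 2^2"
      by (metis less_trans pos2 power_strict_mono zero_le_numeral)
    then show False using that by (simp add: qf_eq)
  qed
  have qball: "qf u0 \<rho> u \<le> 1" if "u \<in> ball u0 \<rho>" for u
  proof -
    have "norm (u - u0) / \<rho> < 1" using that rho by (simp add: dist_norm norm_minus_commute field_simps)
    moreover have "0 \<le> norm (u - u0) / \<rho>" using rho by simp
    ultimately have "(norm (u - u0) / \<rho>)^2 \<le> 1" using power_le_one[of "norm (u - u0) / \<rho>" 2] by simp
    then show ?thesis by (simp add: qf_eq)
  qed
  define al where "al m = fst (idx m)" for m
  define im where "im m = snd (idx m)" for m
  define P where "P m u = bump u0 \<rho> u * mono u0 (al m) u" for m u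
  define e where "e m = ins_coord j (axis (im m) 1)" for m
  define h where "h v u = (\<Sum>m\<in>UNIV. v $ m *\<^sub>R (P m u *\<^sub>R e m))" for v :: "real^'j" and u
  have sP: "smooth_on UNIV (P m)" for m
    unfolding P_def[abs_def] using smooth_on_mult[OF open_UNIV smooth_bump smooth_mono] .
  have sPe: "smooth_on UNIV (\<lambda>u. P m u *\<^sub>R e m)" for m
    using smooth_on_scaleR[OF open_UNIV sP smooth_on_const] .
  have sPe2: "smooth_on UNIV (\<lambda>u. v $ m *\<^sub>R (P m u *\<^sub>R e m))" for v :: "real^'j" and m
    using smooth_on_scaleR[OF open_UNIV smooth_on_const sPe] .
  have sh: "smooth_on UNIV (h v)" for v
    unfolding h_def[abs_def] by (intro smooth_on_sum[OF open_UNIV] sPe2) auto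
  have P0: "P m u = 0" if "u \<notin> C" for m u
  proof -
    have "\<not> qf u0 \<rho> u \<le> 2" using qC that by blast
    then have "qf u0 \<rho> u \<ge> 2" by simp
    then show ?thesis by (simp add: P_def bump_0)
  qed
  have DP0: "Dmulti \<beta> (P m) u = 0" if "u \<notin> C" for \<beta> m u
  proof (rule Dmulti_local_zero[of "- C" "P m" u \<beta>])
    show "open (- C)" by (simp add: C_def open_Compl)
  qed (use P0 that in auto)
  have Dh: "Dmulti \<beta> (h v) u = (\<Sum>m\<in>UNIV. v $ m *\<^sub>R (Dmulti \<beta> (P m) u *\<^sub>R e m))" for v \<beta> u
  proof -
    have "Dmulti \<beta> (h v) u = (\<Sum>m\<in>UNIV. pd (mlist \<beta>) (\<lambda>u. v $ m *\<^sub>R (P m u *\<^sub>R e m)) u)"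
      unfolding Dmulti_pd h_def[abs_def]
      by (rule pd_sum[OF open_UNIV _ _ mlist_Basis UNIV_I], simp, rule sPe2)
    also have "\<dots> = (\<Sum>m\<in>UNIV. v $ m *\<^sub>R (Dmulti \<beta> (P m) u *\<^sub>R e m))"
    proof (rule sum.cong[OF refl])
      fix m
      have "pd (mlist \<beta>) (\<lambda>u. v $ m *\<^sub>R (P m u *\<^sub>R e m)) u = v $ m *\<^sub>R pd (mlist \<beta>) (\<lambda>u. P m u *\<^sub>R e m) u"
        by (rule pd_scaleR[OF open_UNIV sPe mlist_Basis UNIV_I])
      also have "pd (mlist \<beta>) (\<lambda>u. P m u *\<^sub>R e m) u = pd (mlist \<beta>) (P m) u *\<^sub>R e m"
        by (rule pd_linear[OF open_UNIV sP bounded_linear_scaleR_left mlist_Basis UNIV_I])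
      finally show "pd (mlist \<beta>) (\<lambda>u. v $ m *\<^sub>R (P m u *\<^sub>R e m)) u = v $ m *\<^sub>R (Dmulti \<beta> (P m) u *\<^sub>R e m)"
        by (simp add: Dmulti_pd)
    qed
    finally show ?thesis .
  qed
  define B where "B = {..k'} \<times> {..k'} \<times> {..k'}"
  have fB: "finite B" by (simp add: B_def)
  define S where "S u = (\<Sum>\<beta>\<in>B. \<Sum>m\<in>UNIV. \<bar>Dmulti \<beta> (P m) u\<bar> * norm (e m))" for u
  have S0: "S u \<ge> 0" for u unfolding S_def by (intro sum_nonneg) auto
  have cS: "continuous_on UNIV S"
  proof -
    have "continuous_on UNIV (Dmulti \<beta> (P m))" for \<beta> m
      unfolding Dmulti_pd by (rule smooth_on_continuous[OF smooth_on_pd[OF sP mlist_Basis]])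
    then show ?thesis unfolding S_def[abs_def]
      by (intro continuous_intros) auto
  qed
  have Cne: "C \<noteq> {}" "compact C" using r(1) by (auto simp: C_def)
  obtain z where z: "z \<in> C" "\<forall>y\<in>C. S y \<le> S z"
    using continuous_attains_sup[OF Cne(2,1) continuous_on_subset[OF cS subset_UNIV]] by blast
  define M where "M = S z + 1"
  have M: "M > 0" "\<And>u. u \<in> C \<Longrightarrow> S u \<le> M" using S0[of z] z(2) by (auto simp: M_def)
  obtain z' where z': "z' \<in> C" "\<forall>y\<in>C. \<delta> z' \<le> \<delta> y"
    using continuous_attains_inf[OF Cne(2,1) continuous_on_subset[OF d(1) CU]] by blast
  define \<delta>0 where "\<delta>0 = \<delta> z'"
  have d0: "\<delta>0 > 0" using d(2) z'(1) CU by (auto simp: \<delta>0_def)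
  define \<epsilon> where "\<epsilon> = \<delta>0 / M"
  have eps: "\<epsilon> > 0" using d0 M(1) by (simp add: \<epsilon>_def)
  show ?thesis
  proof (intro exI[of _ \<epsilon>] conjI eps allI impI)
    fix v :: "real^'j" assume v: "norm v < \<epsilon>"
    define y where "y u = x u + h v u" for u
    have sx: "smooth_on U x" using x by (simp add: Cinf_smooth)
    have shU: "smooth_on U (h v)" using smooth_on_subset[OF sh subset_UNIV] .
    have sy: "smooth_on U y" unfolding y_def[abs_def] using smooth_on_add[OF U sx shU] .
    have hC: "h v u = 0" if "u \<notin> C" for u using P0[OF that] by (simp add: h_def)
    have yC: "y \<in> Cinf U"
      unfolding Cinf_def
    proof (intro CollectI conjI sy allI impI)
      fix u assume "u \<notin> U"
      then show "y u = 0" using x CU hC[of u] by (auto simp: Cinf_def y_def)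
    qed
    have yW: "y \<in> whitney_nbhd U x k' \<delta>"
      unfolding whitney_nbhd_def
    proof (intro CollectI ballI allI impI)
      fix u a b c assume u: "u \<in> U" and abc: "a + b + c \<le> k'"
      have "Dmulti (a,b,c) y u = Dmulti (a,b,c) x u + Dmulti (a,b,c) (h v) u"
        unfolding Dmulti_pd y_def[abs_def] by (rule pd_add[OF U sx shU mlist_Basis u])
      then have eq: "Dmulti (a,b,c) y u - Dmulti (a,b,c) x u = Dmulti (a,b,c) (h v) u" by simp
      show "norm (Dmulti (a,b,c) y u - Dmulti (a,b,c) x u) < \<delta> u"
      proof (cases "u \<in> C")
        case False
        then show ?thesis unfolding eq Dh using DP0[OF False] d(2) u by simp
      next
        case True
        have "norm (Dmulti (a,b,c) (h v) u) \<le> (\<Sum>m\<in>UNIV. norm (v $ m *\<^sub>R (Dmulti (a,b,c) (P m) u *\<^sub>R e m)))"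
          unfolding Dh by (rule norm_sum)
        also have "\<dots> = (\<Sum>m\<in>UNIV. \<bar>v $ m\<bar> * (\<bar>Dmulti (a,b,c) (P m) u\<bar> * norm (e m)))" by (simp add: abs_mult mult.assoc)
        also have "\<dots> \<le> (\<Sum>m\<in>UNIV. norm v * (\<bar>Dmulti (a,b,c) (P m) u\<bar> * norm (e m)))"
          by (intro sum_mono mult_right_mono component_le_norm_cart) auto
        also have "\<dots> = norm v * (\<Sum>m\<in>UNIV. \<bar>Dmulti (a,b,c) (P m) u\<bar> * norm (e m))"
          by (simp add: sum_distrib_left)
        also have "\<dots> \<le> norm v * S u"
        proof (rule mult_left_mono[OF _ norm_ge_zero])
          have "(a,b,c) \<in> B" using abc by (auto simp: B_def)
          then show "(\<Sum>m\<in>UNIV. \<bar>Dmulti (a,b,c) (P m) u\<bar> * norm (e m)) \<le> S u"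
            unfolding S_def
            by (rule member_le_sum[where f="\<lambda>\<beta>. \<Sum>m\<in>UNIV. \<bar>Dmulti \<beta> (P m) u\<bar> * norm (e m)", OF _ _ fB])
              (auto intro: sum_nonneg)
        qed
        also have "\<dots> \<le> norm v * M" using M(2)[OF True] by (simp add: mult_left_mono)
        also have "\<dots> < \<epsilon> * M" using v M(1) by simp
        also have "\<dots> = \<delta>0" using M(1) by (simp add: \<epsilon>_def)
        also have "\<dots> \<le> \<delta> u" using z'(2) True by (simp add: \<delta>0_def)
        finally show ?thesis unfolding eq .
      qed
    qed
    have hj: "h v w $ j = 0" for w by (simp add: h_def e_def)
    have Gy: "Gf j y \<xi> u0 t0 0 w = Gf j x \<xi> u0 t0 0 w + forget_coord j (h v w)" for w
      by (simp add: Gf_eq c_fun_def a_const_def y_def hj forget_add)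
    have fsum: "forget_coord j (sum g A) = (\<Sum>m\<in>A. forget_coord j (g m))" for g :: "'j \<Rightarrow> real^4" and A
      using linear_sum[OF lin_forget] by (simp add: o_def)
    have fh: "forget_coord j (\<Sum>m\<in>UNIV. v $ m *\<^sub>R (c m *\<^sub>R e m)) = (\<Sum>m\<in>UNIV. v $ m *\<^sub>R (c m *\<^sub>R axis (im m) 1))" for c
      by (simp add: fsum forget_scale e_def)
    define V where "V = Vj U \<xi> j"
    have oV: "open V" using open_Vj[OF U xi] V_def by simp
    have u0V: "u0 \<in> V" using u0 by (simp add: V_def Vj_def)
    have sGx: "smooth_on V (Gf j x \<xi> u0 t0 0)" using smooth_Gf[OF U xi sx] V_def by simp
    have sfh: "smooth_on UNIV (\<lambda>w. forget_coord j (h v w))"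
      using smooth_on_linear[OF open_UNIV bounded_linear_forget sh] .
    have DP: "Dmulti (a,b,c) (P m) u0 = (if (a,b,c) = al m then fact a * fact b * fact c else 0)" for a b c m
    proof -
      have "Dmulti (a,b,c) (P m) u0 = Dmulti (a,b,c) (mono u0 (al m)) u0"
      proof (rule Dmulti_local[of "ball u0 \<rho>"])
        show "open (ball u0 \<rho>)" by simp
        show "u0 \<in> ball u0 \<rho>" using rho by simp
        fix w assume "w \<in> ball u0 \<rho>"
        then show "P m w = mono u0 (al m) w" using qball bump_1 by (simp add: P_def)
      qed
      moreover obtain a' b' c' where "al m = (a',b',c')" by (metis prod.exhaust)
      ultimately show ?thesis by (simp add: Dmulti_mono)
    qed
    have injidx: "inj idx" using idx bij_betw_imp_inj_on by blast
    have jeq: "jet idx (Gf j y \<xi> u0 t0 0) u0 = jet idx (Gf j x \<xi> u0 t0 0) u0 + v"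
    proof (subst vec_eq_iff, rule allI)
      fix m0
      obtain a b c i where im0: "idx m0 = ((a,b,c),i)" by (metis prod.exhaust)
      define F where "F = (fact a * fact b * fact c :: real)"
      have F0: "F \<noteq> 0" by (simp add: F_def)
      have "Dmulti (a,b,c) (Gf j y \<xi> u0 t0 0) u0 = Dmulti (a,b,c) (\<lambda>w. Gf j x \<xi> u0 t0 0 w + forget_coord j (h v w)) u0"
        using ext[of "Gf j y \<xi> u0 t0 0" "\<lambda>w. Gf j x \<xi> u0 t0 0 w + forget_coord j (h v w)", OF Gy]
        by (simp only:)
      also have "\<dots> = Dmulti (a,b,c) (Gf j x \<xi> u0 t0 0) u0 + Dmulti (a,b,c) (\<lambda>w. forget_coord j (h v w)) u0"
        unfolding Dmulti_pd by (rule pd_add[OF oV sGx smooth_on_subset[OF sfh subset_UNIV] mlist_Basis u0V])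
      also have "Dmulti (a,b,c) (\<lambda>w. forget_coord j (h v w)) u0 = forget_coord j (Dmulti (a,b,c) (h v) u0)"
        unfolding Dmulti_pd by (rule pd_linear[OF open_UNIV sh bounded_linear_forget mlist_Basis UNIV_I])
      also have "\<dots> = (\<Sum>m\<in>UNIV. v $ m *\<^sub>R (Dmulti (a,b,c) (P m) u0 *\<^sub>R axis (im m) 1))"
        unfolding Dh by (rule fh)
      finally have D: "Dmulti (a,b,c) (Gf j y \<xi> u0 t0 0) u0 = Dmulti (a,b,c) (Gf j x \<xi> u0 t0 0) u0 +
          (\<Sum>m\<in>UNIV. v $ m *\<^sub>R (Dmulti (a,b,c) (P m) u0 *\<^sub>R axis (im m) 1))" .
      have tm: "v $ m * Dmulti (a,b,c) (P m) u0 * (axis (im m) 1 :: real^3) $ i = (if m = m0 then v $ m0 * F else 0)" for m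
      proof -
        have "idx m = (al m, im m)" by (simp add: al_def im_def)
        then have "(al m = (a,b,c) \<and> im m = i) \<longleftrightarrow> m = m0"
          using injidx im0 by (metis injD prod.inject)
        then show ?thesis by (auto simp: DP axis_def F_def)
      qed
      have "(\<Sum>m\<in>UNIV. v $ m *\<^sub>R (Dmulti (a,b,c) (P m) u0 *\<^sub>R (axis (im m) 1 :: real^3))) $ i = v $ m0 * F"
        by (simp add: tm)
      then show "jet idx (Gf j y \<xi> u0 t0 0) u0 $ m0 = (jet idx (Gf j x \<xi> u0 t0 0) u0 + v) $ m0"
        using F0 by (simp add: jet_nth[where idx=idx, OF im0] D F_def[symmetric] add_divide_distrib)
    qed
    show "\<exists>y\<in>Cinf U. y \<in> whitney_nbhd U x k' \<delta> \<and> jet idx (Gf j y \<xi> u0 t0 0) u0 = jet idx (Gf j x \<xi> u0 t0 0) u0 + v"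
      using yC yW jeq by blast
  qed
qed


theorem lemma4p1:
  fixes k :: nat
    and idx :: "'j::finite \<Rightarrow> (nat \<times> nat \<times> nat) \<times> 3"
    and W :: "(real^'j) set"
    and U :: "(real^3) set" and Iv :: "real set"
    and \<xi> :: "real^3 \<Rightarrow> real^4"
    and u0 :: "real^3" and t0 :: real and j :: 4
  assumes "bij_betw idx UNIV (jet_index k)"
    and "submanifold W"
    and "open U" and "open Iv" and "is_interval Iv"
    and "smooth_on U \<xi>" and "\<forall>u\<in>U. \<xi> u \<noteq> 0"
    and "u0 \<in> U" and "t0 \<in> Iv"
    and "\<xi> u0 $ j \<noteq> 0"
  shows "residual_in (whitney_Cinf U)
           {x \<in> Cinf U. transversal_at
               (jet1 idx (\<lambda>p. forget_coord j (Ftilde j x \<xi> u0 t0 p))) W (u0, 0)}"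
proof -
  note idx = assms(1) and sub = assms(2) and U = assms(3) and xi = assms(6) and u0 = assms(8) assms(10)
  let ?X = "whitney_Cinf U"
  let ?S = "{x \<in> Cinf U. transversal_at (jet1 idx (\<lambda>p. forget_coord j (Ftilde j x \<xi> u0 t0 p))) W (u0, 0)}"
  define K where "K = closure (W - interior W)"
  have cK: "closed K" unfolding K_def by simp
  have iK: "interior K = {}" unfolding K_def using nowhere_dense_boundary[OF sub] .
  define Jx where "Jx x = jet idx (Gf j x \<xi> u0 t0 0) u0" for x
  have jet1_eq: "jet1 idx (\<lambda>p. forget_coord j (Ftilde j x \<xi> u0 t0 p)) (u0, 0) = Jx x" for x
    by (simp add: jet1_def Gf_def Jx_def)
  define T where "T = {x \<in> Cinf U. Jx x \<notin> K}"
  have openT: "openin ?X T"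
    unfolding openin_whitney wpred_def
  proof safe
    fix x assume "x \<in> T" then show "x \<in> Cinf U" by (simp add: T_def)
  next
    fix x assume xT: "x \<in> T"
    then have x: "x \<in> Cinf U" "Jx x \<notin> K" by (auto simp: T_def)
    obtain e where e: "e > 0" "ball (Jx x) e \<subseteq> - K"
      using cK x(2) open_contains_ball[of "- K"] by (auto simp: open_Compl)
    obtain \<eta> where eta: "\<eta> > 0" "\<forall>x'\<in>Cinf U. x' \<in> whitney_nbhd U x k (\<lambda>_. \<eta>) \<longrightarrow> norm (Jx x' - Jx x) < e"
      using jet_cont[OF U xi u0 idx x(1) e(1), of t0] unfolding Jx_def by blast
    have "Cinf U \<inter> whitney_nbhd U x k (\<lambda>_. \<eta>) \<subseteq> T"
    proof
      fix x' assume x': "x' \<in> Cinf U \<inter> whitney_nbhd U x k (\<lambda>_. \<eta>)"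
      then have "norm (Jx x' - Jx x) < e" using eta(2) by blast
      then have "Jx x' \<in> ball (Jx x) e" by (simp add: dist_norm norm_minus_commute)
      then show "x' \<in> T" using e(2) x' by (auto simp: T_def)
    qed
    then show "\<exists>k \<delta>. continuous_on U \<delta> \<and> (\<forall>u\<in>U. 0 < \<delta> u) \<and> Cinf U \<inter> whitney_nbhd U x k \<delta> \<subseteq> T"
      using eta(1) by (intro exI[of _ k] exI[of _ "\<lambda>_. \<eta>"]) (auto intro: continuous_on_const)
  qed
  have denseT: "?X closure_of T = topspace ?X"
  proof
    show "?X closure_of T \<subseteq> topspace ?X" by (rule closure_of_subset_topspace)
    show "topspace ?X \<subseteq> ?X closure_of T"
    proof
      fix x assume "x \<in> topspace ?X"
      then have x: "x \<in> Cinf U" by (simp add: topspace_whitney)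
      show "x \<in> ?X closure_of T"
        unfolding in_closure_of
      proof (intro conjI allI impI)
        show "x \<in> topspace ?X" using x by (simp add: topspace_whitney)
      next
        fix Ob assume O: "x \<in> Ob \<and> openin ?X Ob"
        then obtain k' \<delta> where kd: "continuous_on U \<delta>" "\<forall>u\<in>U. 0 < \<delta> u" "Cinf U \<inter> whitney_nbhd U x k' \<delta> \<subseteq> Ob"
          unfolding openin_whitney wpred_def by blast
        obtain \<epsilon> where eps: "\<epsilon> > 0" "\<forall>v. norm v < \<epsilon> \<longrightarrow> (\<exists>y\<in>Cinf U. y \<in> whitney_nbhd U x k' \<delta> \<and> Jx y = Jx x + v)"
          using perturb[OF U xi u0 idx x kd(1,2), of k' t0] unfolding Jx_def by blast
        have "\<not> ball (Jx x) \<epsilon> \<subseteq> K"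
        proof
          assume "ball (Jx x) \<epsilon> \<subseteq> K"
          then have "ball (Jx x) \<epsilon> \<subseteq> interior K" using interior_maximal open_ball by blast
          then show False using iK eps(1) by auto
        qed
        then obtain w where w: "w \<in> ball (Jx x) \<epsilon>" "w \<notin> K" by blast
        have "norm (w - Jx x) < \<epsilon>" using w(1) by (simp add: dist_norm norm_minus_commute)
        then obtain y where y: "y \<in> Cinf U" "y \<in> whitney_nbhd U x k' \<delta>" "Jx y = Jx x + (w - Jx x)"
          using eps(2) by blast
        have "y \<in> T" using y w(2) by (simp add: T_def)
        moreover have "y \<in> Ob" using kd(3) y by blast
        ultimately show "\<exists>y. y \<in> T \<and> y \<in> Ob" by blast
      qed
    qed
  qed
  have subS: "topspace ?X \<inter> \<Inter>{T} \<subseteq> ?S"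
  proof
    fix x assume "x \<in> topspace ?X \<inter> \<Inter>{T}"
    then have xT: "x \<in> T" by simp
    then have x: "x \<in> Cinf U" "Jx x \<notin> K" by (auto simp: T_def)
    have "W - interior W \<subseteq> K" unfolding K_def by (rule closure_subset)
    then have "Jx x \<in> W \<longrightarrow> Jx x \<in> interior W" using x(2) by blast
    then have "jet1 idx (\<lambda>p. forget_coord j (Ftilde j x \<xi> u0 t0 p)) (u0, 0) \<in> W \<longrightarrow>
        jet1 idx (\<lambda>p. forget_coord j (Ftilde j x \<xi> u0 t0 p)) (u0, 0) \<in> interior W"
      by (simp only: jet1_eq)
    then have "transversal_at (jet1 idx (\<lambda>p. forget_coord j (Ftilde j x \<xi> u0 t0 p))) W (u0, 0)"
      by (rule transversal_interior[OF J_differentiable[OF U xi u0 x(1)]])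
    then show "x \<in> ?S" using x by simp
  qed
  show ?thesis
    unfolding residual_in_def
  proof (intro conjI exI[of _ "{T}"])
    show "?S \<subseteq> topspace ?X" by (auto simp: topspace_whitney)
    show "countable {T}" by simp
    show "\<forall>T'\<in>{T}. openin ?X T' \<and> ?X closure_of T' = topspace ?X" using openT denseT by simp
    show "topspace ?X \<inter> \<Inter>{T} \<subseteq> ?S" by (rule subS)
  qed
qed


end
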